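(* Let $A$ be a $C^*$-algebra and let $x\in A$ (respectively $x\in M(A)$, the multiplier algebra of $A$). Suppose that $J=Ax=\{ax: a\in A\}$ is norm closed (so it is a closed left ideal). Then $J=Ae$ for some orthogonal projection $e\in J$ (respectively $e\in M(A)$).
   Context: Here $Ax$ denotes the set $\{ax : a\in A\}$ itself, not its closure. *)

theory Defs
  imports Complex_Main
begin

class cstar_algebra = real_normed_algebra + complete_space +
  fixes cscale :: "complex \<Rightarrow> 'a \<Rightarrow> 'a"
    and invol :: "'a \<Rightarrow> 'a"
  assumes cscale_add_left: "cscale (c + d) x = cscale c x + cscale d x"
    and cscale_add_right: "cscale c (x + y) = cscale c x + cscale c y"
    and cscale_mult: "cscale (c * d) x = cscale c (cscale d x)"
    and cscale_one: "cscale 1 x = x"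
    and cscale_of_real: "cscale (complex_of_real r) x = scaleR r x"
    and norm_cscale: "norm (cscale c x) = cmod c * norm x"
    and cscale_mult_left: "cscale c (x * y) = cscale c x * y"
    and cscale_mult_right: "cscale c (x * y) = x * cscale c y"
    and invol_add: "invol (x + y) = invol x + invol y"
    and invol_cscale: "invol (cscale c x) = cscale (cnj c) (invol x)"
    and invol_mult: "invol (x * y) = invol y * invol x"
    and invol_invol: "invol (invol x) = x"
    and cstar_identity: "norm (invol x * x) = (norm x)\<^sup>2"

text \<open>Multiplier algebra M(A), realised as double centralizers (L, R):
  L is left multiplication (m a = L a), R right multiplication (a m = R a),
  subject to a * L b = R a * b.\<close>

type_synonym 'a multiplier = "('a \<Rightarrow> 'a) \<times> ('a \<Rightarrow> 'a)"

definition is_multiplier :: "'a::cstar_algebra multiplier \<Rightarrow> bool" where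
  "is_multiplier m \<longleftrightarrow> (\<forall>a b. a * fst m b = snd m a * b)"

definition mult_times :: "'a::cstar_algebra multiplier \<Rightarrow> 'a multiplier \<Rightarrow> 'a multiplier" where
  "mult_times m n = (fst m \<circ> fst n, snd n \<circ> snd m)"

definition mult_star :: "'a::cstar_algebra multiplier \<Rightarrow> 'a multiplier" where
  "mult_star m = ((\<lambda>a. invol (snd m (invol a))), (\<lambda>a. invol (fst m (invol a))))"

definition left_mult_set :: "'a::cstar_algebra \<Rightarrow> 'a set" where
  "left_mult_set x = {a * x | a. True}"

definition mult_left_mult_set :: "'a::cstar_algebra multiplier \<Rightarrow> 'a set" where
  "mult_left_mult_set m = {snd m a | a. True}"

end

theory Submission
  imports Defs "HOL-Analysis.Analysis"
begin

lemma cscale_zero_left [simp]: "cscale 0 (x::'a::cstar_algebra) = 0"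
  using norm_cscale[of 0 x] by simp

lemma cscale_zero_right [simp]: "cscale c (0::'a::cstar_algebra) = 0"
  using norm_cscale[of c "0::'a"] by simp

lemma cscale_minus_left: "cscale (-c) (x::'a::cstar_algebra) = - cscale c x"
  using cscale_add_left[of "-c" c x] by (simp add: eq_neg_iff_add_eq_0)

lemma cscale_minus_right: "cscale c (-x::'a::cstar_algebra) = - cscale c x"
  using cscale_add_right[of c "-x" x] by (simp add: eq_neg_iff_add_eq_0)

lemma cscale_diff_right: "cscale c (x - y::'a::cstar_algebra) = cscale c x - cscale c y"
  using cscale_add_right[of c x "-y"] by (simp add: cscale_minus_right)

lemma cscale_diff_left: "cscale (c - d) (x::'a::cstar_algebra) = cscale c x - cscale d x"
  using cscale_add_left[of c "-d" x] by (simp add: cscale_minus_left)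

lemma invol_zero [simp]: "invol (0::'a::cstar_algebra) = 0"
  using invol_add[of "0::'a" 0] by simp

lemma invol_minus: "invol (- x::'a::cstar_algebra) = - invol x"
  using invol_add[of "-x" x] by (simp add: eq_neg_iff_add_eq_0)

lemma invol_diff: "invol (x - y::'a::cstar_algebra) = invol x - invol y"
  using invol_add[of x "-y"] by (simp add: invol_minus)

lemma invol_scaleR: "invol (scaleR r x::'a::cstar_algebra) = scaleR r (invol x)"
  using invol_cscale[of "complex_of_real r" x] by (simp add: cscale_of_real)

lemma norm_invol [simp]: "norm (invol (x::'a::cstar_algebra)) = norm x"
proof -
  have le: "norm y \<le> norm (invol y)" for y :: 'a
  proof (cases "norm y = 0")
    case True then show ?thesis by simp
  next
    case False
    have "(norm y)^2 = norm (invol y * y)" by (simp add: cstar_identity)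
    also have "\<dots> \<le> norm (invol y) * norm y" by (rule norm_mult_ineq)
    finally have "norm y * norm y \<le> norm (invol y) * norm y" by (simp add: power2_eq_square)
    then show ?thesis using False by (simp add: mult_le_cancel_right)
  qed
  show ?thesis using le[of x] le[of "invol x"] by (simp add: invol_invol)
qed

lemma cstar_identity2: "norm ((x::'a::cstar_algebra) * invol x) = (norm x)^2"
  using cstar_identity[of "invol x"] by (simp add: invol_invol)

lemma left_nondeg: assumes "\<And>a. a * z = (0::'a::cstar_algebra)" shows "z = 0"
proof -
  have "(norm z)^2 = 0" using assms[of "invol z"] by (simp add: cstar_identity[symmetric])
  then show ?thesis by simp
qed

lemma right_nondeg: assumes "\<And>a. z * a = (0::'a::cstar_algebra)" shows "z = 0"
proof -
  have "(norm z)^2 = 0" using assms[of "invol z"] by (simp add: cstar_identity2[symmetric])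
  then show ?thesis by simp
qed

lemma norm_cscale_i [simp]: "norm (cscale \<i> (x::'a::cstar_algebra)) = norm x"
  by (simp add: norm_cscale)

lemma multI: "is_multiplier m \<Longrightarrow> a * fst m b = snd m a * b"
  by (simp add: is_multiplier_def)

lemma mult_L_add: assumes "is_multiplier m" shows "fst m (b + c) = fst m b + fst m c"
proof -
  have "a * (fst m (b + c) - (fst m b + fst m c)) = 0" for a
    using multI[OF assms] by (simp add: algebra_simps)
  then show ?thesis using left_nondeg[of "fst m (b + c) - (fst m b + fst m c)"] by simp
qed

lemma mult_R_add: assumes "is_multiplier m" shows "snd m (b + c) = snd m b + snd m c"
proof -
  have "(snd m (b + c) - (snd m b + snd m c)) * a = 0" for a
    using multI[OF assms, symmetric] by (simp add: algebra_simps)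
  then show ?thesis using right_nondeg[of "snd m (b + c) - (snd m b + snd m c)"] by simp
qed

lemma mult_L_cscale: assumes "is_multiplier m" shows "fst m (cscale c b) = cscale c (fst m b)"
proof -
  have "a * (fst m (cscale c b) - cscale c (fst m b)) = 0" for a
    using multI[OF assms] by (simp add: algebra_simps cscale_mult_right[symmetric] cscale_mult_left)
  then show ?thesis using left_nondeg[of "fst m (cscale c b) - cscale c (fst m b)"] by simp
qed

lemma mult_R_cscale: assumes "is_multiplier m" shows "snd m (cscale c b) = cscale c (snd m b)"
proof -
  have "(snd m (cscale c b) - cscale c (snd m b)) * a = 0" for a
    using multI[OF assms, symmetric] by (simp add: algebra_simps cscale_mult_right[symmetric] cscale_mult_left[symmetric])
  then show ?thesis using right_nondeg[of "snd m (cscale c b) - cscale c (snd m b)"] by simp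
qed

lemma mult_R_mult: assumes "is_multiplier m" shows "snd m (b * c) = b * snd m c"
proof -
  have "(snd m (b * c) - b * snd m c) * a = 0" for a
    using multI[OF assms, symmetric] by (simp add: algebra_simps mult.assoc)
  then show ?thesis using right_nondeg[of "snd m (b * c) - b * snd m c"] by simp
qed

lemma mult_L_mult: assumes "is_multiplier m" shows "fst m (b * c) = fst m b * c"
proof -
  have "a * (fst m (b * c) - fst m b * c) = 0" for a
  proof -
    have "a * fst m (b * c) = snd m a * (b * c)" using multI[OF assms] by simp
    also have "\<dots> = (snd m a * b) * c" by (simp add: mult.assoc)
    also have "\<dots> = (a * fst m b) * c" using multI[OF assms] by simp
    finally show ?thesis by (simp add: right_diff_distrib mult.assoc)
  qed
  then show ?thesis using left_nondeg[of "fst m (b * c) - fst m b * c"] by simp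
qed

typedef (overloaded) ('a::cstar_algebra) mlt = "{m :: 'a multiplier. is_multiplier m}"
  morphisms Rep_mlt Abs_mlt
  by (rule exI[of _ "(id,id)"]) (simp add: is_multiplier_def)

definition act :: "'a::cstar_algebra \<Rightarrow> 'a mlt \<Rightarrow> 'a" where
  "act b X = snd (Rep_mlt X) b"

definition lact :: "'a::cstar_algebra mlt \<Rightarrow> 'a \<Rightarrow> 'a" where
  "lact X b = fst (Rep_mlt X) b"

lemma Rep_mlt_mult: "is_multiplier (Rep_mlt X)"
  using Rep_mlt by blast

lemma act_lact: "a * lact X b = act a X * b"
  unfolding act_def lact_def using multI[OF Rep_mlt_mult] by blast

lemma act_add [simp]: "act (a + b) X = act a X + act b X"
  unfolding act_def using mult_R_add[OF Rep_mlt_mult] by blast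

lemma lact_add [simp]: "lact X (a + b) = lact X a + lact X b"
  unfolding lact_def using mult_L_add[OF Rep_mlt_mult] by blast

lemma act_cscale [simp]: "act (cscale c a) X = cscale c (act a X)"
  unfolding act_def using mult_R_cscale[OF Rep_mlt_mult] by blast

lemma lact_cscale [simp]: "lact X (cscale c a) = cscale c (lact X a)"
  unfolding lact_def using mult_L_cscale[OF Rep_mlt_mult] by blast

lemma act_mult: "act (a * b) X = a * act b X"
  unfolding act_def using mult_R_mult[OF Rep_mlt_mult] by blast

lemma lact_mult: "lact X (a * b) = lact X a * b"
  unfolding lact_def using mult_L_mult[OF Rep_mlt_mult] by blast

lemma act_zero [simp]: "act 0 X = 0"
  using act_add[of 0 0 X] by simp

lemma lact_zero [simp]: "lact X 0 = 0"
  using lact_add[of X 0 0] by simp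

lemma act_minus [simp]: "act (- a) X = - act a X"
  using act_add[of "-a" a X] by (simp add: eq_neg_iff_add_eq_0)

lemma lact_minus [simp]: "lact X (- a) = - lact X a"
  using lact_add[of X "-a" a] by (simp add: eq_neg_iff_add_eq_0)

lemma act_diff [simp]: "act (a - b) X = act a X - act b X"
  using act_add[of a "-b" X] by simp

lemma lact_diff [simp]: "lact X (a - b) = lact X a - lact X b"
  using lact_add[of X a "-b"] by simp

lemma act_scaleR [simp]: "act (scaleR r a) X = scaleR r (act a X)"
  using act_cscale[of "complex_of_real r" a X] by (simp add: cscale_of_real)

lemma mlt_eqI: assumes "\<And>b. act b X = act b Y" shows "X = Y"
proof -
  have R: "snd (Rep_mlt X) = snd (Rep_mlt Y)" using assms unfolding act_def by blast
  have "a * (lact X b - lact Y b) = 0" for a b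
    by (simp add: algebra_simps act_lact assms)
  then have "lact X b = lact Y b" for b using left_nondeg[of "lact X b - lact Y b"] by simp
  then have L: "fst (Rep_mlt X) = fst (Rep_mlt Y)" unfolding lact_def by blast
  have "Rep_mlt X = Rep_mlt Y" using R L by (simp add: prod_eq_iff)
  then show ?thesis using Rep_mlt_inject by blast
qed

lemma act_Abs: "is_multiplier m \<Longrightarrow> act b (Abs_mlt m) = snd m b"
  unfolding act_def by (simp add: Abs_mlt_inverse)

lemma lact_Abs: "is_multiplier m \<Longrightarrow> lact (Abs_mlt m) b = fst m b"
  unfolding lact_def by (simp add: Abs_mlt_inverse)

lemma is_mult_plus: "is_multiplier (\<lambda>b. lact X b + lact Y b, \<lambda>b. act b X + act b Y)"
  unfolding is_multiplier_def by (simp add: distrib_left distrib_right act_lact)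

lemma is_mult_minus: "is_multiplier (\<lambda>b. lact X b - lact Y b, \<lambda>b. act b X - act b Y)"
  unfolding is_multiplier_def by (simp add: right_diff_distrib left_diff_distrib act_lact)

lemma is_mult_uminus: "is_multiplier (\<lambda>b. - lact X b, \<lambda>b. - act b X)"
  unfolding is_multiplier_def by (simp add: act_lact)

lemma is_mult_zero: "is_multiplier (\<lambda>b. 0::'a::cstar_algebra, \<lambda>b. 0)"
  unfolding is_multiplier_def by simp

lemma is_mult_one: "is_multiplier (id::'a::cstar_algebra \<Rightarrow> 'a, id)"
  unfolding is_multiplier_def by simp

lemma is_mult_times: "is_multiplier (mult_times (Rep_mlt X) (Rep_mlt Y))"
  unfolding is_multiplier_def mult_times_def
  by (simp add: act_lact[unfolded act_def lact_def])

lemma is_mult_sc: "is_multiplier (cscale c :: 'a::cstar_algebra \<Rightarrow> 'a, cscale c)"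
  unfolding is_multiplier_def by (simp add: cscale_mult_right[symmetric] cscale_mult_left)

lemma is_mult_emb: "is_multiplier (\<lambda>b. z * b, \<lambda>b. b * (z::'a::cstar_algebra))"
  unfolding is_multiplier_def by (simp add: mult.assoc)

lemma is_mult_star: "is_multiplier (mult_star (Rep_mlt X))"
  unfolding is_multiplier_def mult_star_def
proof (intro allI, simp)
  fix a b :: 'a
  have "invol (a * invol (snd (Rep_mlt X) (invol b))) = invol (invol (fst (Rep_mlt X) (invol a)) * b)"
    using act_lact[of "invol b" X "invol a"] by (simp add: invol_mult invol_invol act_def lact_def)
  then have "invol (invol (a * invol (snd (Rep_mlt X) (invol b)))) = invol (invol (invol (fst (Rep_mlt X) (invol a)) * b))"
    by simp
  then show "a * invol (snd (Rep_mlt X) (invol b)) = invol (fst (Rep_mlt X) (invol a)) * b"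
    by (simp only: invol_invol)
qed

instantiation mlt :: (cstar_algebra) "{ring, monoid_mult}"
begin

definition zero_mlt_def: "0 = Abs_mlt (\<lambda>b. 0, \<lambda>b. 0)"
definition plus_mlt_def: "X + Y = Abs_mlt (\<lambda>b. lact X b + lact Y b, \<lambda>b. act b X + act b Y)"
definition minus_mlt_def: "X - Y = Abs_mlt (\<lambda>b. lact X b - lact Y b, \<lambda>b. act b X - act b Y)"
definition uminus_mlt_def: "- X = Abs_mlt (\<lambda>b. - lact X b, \<lambda>b. - act b X)"
definition times_mlt_def: "X * Y = Abs_mlt (mult_times (Rep_mlt X) (Rep_mlt Y))"
definition one_mlt_def: "1 = Abs_mlt (id, id)"

lemma act_plus_mlt [simp]: "act b (X + Y) = act b X + act b Y"
  by (simp add: plus_mlt_def act_Abs[OF is_mult_plus])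
lemma act_minus_mlt [simp]: "act b (X - Y) = act b X - act b Y"
  by (simp add: minus_mlt_def act_Abs[OF is_mult_minus])
lemma act_uminus_mlt [simp]: "act b (- X) = - act b X"
  by (simp add: uminus_mlt_def act_Abs[OF is_mult_uminus])
lemma act_zero_mlt [simp]: "act b 0 = 0"
  by (simp add: zero_mlt_def act_Abs[OF is_mult_zero])
lemma act_one_mlt [simp]: "act b 1 = b"
  by (simp add: one_mlt_def act_Abs[OF is_mult_one])
lemma act_times_mlt [simp]: "act b (X * Y) = act (act b X) Y"
  unfolding times_mlt_def act_Abs[OF is_mult_times] by (simp add: mult_times_def act_def)

lemma lact_plus_mlt [simp]: "lact (X + Y) b = lact X b + lact Y b"
  by (simp add: plus_mlt_def lact_Abs[OF is_mult_plus])
lemma lact_minus_mlt [simp]: "lact (X - Y) b = lact X b - lact Y b"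
  by (simp add: minus_mlt_def lact_Abs[OF is_mult_minus])
lemma lact_uminus_mlt [simp]: "lact (- X) b = - lact X b"
  by (simp add: uminus_mlt_def lact_Abs[OF is_mult_uminus])
lemma lact_zero_mlt [simp]: "lact 0 b = 0"
  by (simp add: zero_mlt_def lact_Abs[OF is_mult_zero])
lemma lact_one_mlt [simp]: "lact 1 b = b"
  by (simp add: one_mlt_def lact_Abs[OF is_mult_one])
lemma lact_times_mlt [simp]: "lact (X * Y) b = lact X (lact Y b)"
  unfolding times_mlt_def lact_Abs[OF is_mult_times] by (simp add: mult_times_def lact_def)

instance
proof
  fix a b c :: "'a mlt"
  show "a + b + c = a + (b + c)" by (rule mlt_eqI) (simp add: add.assoc)
  show "a + b = b + a" by (rule mlt_eqI) (simp add: add.commute)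
  show "0 + a = a" by (rule mlt_eqI) simp
  show "- a + a = 0" by (rule mlt_eqI) simp
  show "a - b = a + - b" by (rule mlt_eqI) simp
  show "a * b * c = a * (b * c)" by (rule mlt_eqI) simp
  show "(a + b) * c = a * c + b * c" by (rule mlt_eqI) simp
  show "a * (b + c) = a * b + a * c" by (rule mlt_eqI) simp
  show "1 * a = a" by (rule mlt_eqI) simp
  show "a * 1 = a" by (rule mlt_eqI) simp
qed

end

definition sc :: "complex \<Rightarrow> 'a::cstar_algebra mlt" where
  "sc c = Abs_mlt (cscale c, cscale c)"

definition ustar :: "'a::cstar_algebra mlt \<Rightarrow> 'a mlt" where
  "ustar X = Abs_mlt (mult_star (Rep_mlt X))"

definition emb :: "'a::cstar_algebra \<Rightarrow> 'a mlt" where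
  "emb z = Abs_mlt (\<lambda>b. z * b, \<lambda>b. b * z)"

lemma act_sc [simp]: "act b (sc c) = cscale c b"
  by (simp add: sc_def act_Abs[OF is_mult_sc])
lemma lact_sc [simp]: "lact (sc c) b = cscale c b"
  by (simp add: sc_def lact_Abs[OF is_mult_sc])
lemma act_ustar: "act b (ustar X) = invol (lact X (invol b))"
  unfolding ustar_def act_Abs[OF is_mult_star] by (simp add: mult_star_def lact_def)
lemma lact_ustar: "lact (ustar X) b = invol (act (invol b) X)"
  unfolding ustar_def lact_Abs[OF is_mult_star] by (simp add: mult_star_def act_def)
lemma act_emb [simp]: "act b (emb z) = b * z"
  by (simp add: emb_def act_Abs[OF is_mult_emb])
lemma lact_emb [simp]: "lact (emb z) b = z * b"
  by (simp add: emb_def lact_Abs[OF is_mult_emb])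

lemma invol_act: "invol (act b X) = lact (ustar X) (invol b)"
  by (simp add: lact_ustar invol_invol)

lemma invol_lact: "invol (lact X b) = act (invol b) (ustar X)"
  by (simp add: act_ustar invol_invol)

lemma ustar_ustar [simp]: "ustar (ustar X) = X"
  by (rule mlt_eqI) (simp add: act_ustar lact_ustar invol_invol)

lemma ustar_plus: "ustar (X + Y) = ustar X + ustar Y"
  by (rule mlt_eqI) (simp add: act_ustar invol_add)

lemma ustar_minus: "ustar (X - Y) = ustar X - ustar Y"
  by (rule mlt_eqI) (simp add: act_ustar invol_diff)

lemma ustar_uminus: "ustar (- X) = - ustar X"
  by (rule mlt_eqI) (simp add: act_ustar invol_minus)

lemma ustar_zero [simp]: "ustar 0 = 0"
  by (rule mlt_eqI) (simp add: act_ustar)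

lemma ustar_one [simp]: "ustar 1 = 1"
  by (rule mlt_eqI) (simp add: act_ustar invol_invol)

lemma ustar_times: "ustar (X * Y) = ustar Y * ustar X"
  by (rule mlt_eqI) (simp add: act_ustar invol_invol)

lemma ustar_sc: "ustar (sc c) = sc (cnj c)"
  by (rule mlt_eqI) (simp add: act_ustar invol_cscale invol_invol)

lemma ustar_emb: "ustar (emb z) = emb (invol z)"
  by (rule mlt_eqI) (simp add: act_ustar invol_mult invol_invol)

lemma cscale_commute: "cscale c (cscale d (b::'a::cstar_algebra)) = cscale d (cscale c b)"
  by (metis cscale_mult mult.commute)

lemma sc_mult: "sc (c * d) = sc c * sc d"
  by (rule mlt_eqI) (simp add: cscale_mult cscale_commute)

lemma sc_add: "sc (c + d) = sc c + sc d"
  by (rule mlt_eqI) (simp add: cscale_add_left)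

lemma sc_diff: "sc (c - d) = sc c - sc d"
  by (rule mlt_eqI) (simp add: cscale_diff_left)

lemma sc_one [simp]: "sc 1 = 1"
  by (rule mlt_eqI) (simp add: cscale_one)

lemma sc_zero [simp]: "sc 0 = 0"
  by (rule mlt_eqI) simp

lemma sc_commute: "sc c * X = X * sc c"
  by (rule mlt_eqI) simp


lemma emb_plus: "emb (z + w) = emb z + emb w"
  by (rule mlt_eqI) (simp add: distrib_left)
lemma emb_minus: "emb (z - w) = emb z - emb w"
  by (rule mlt_eqI) (simp add: right_diff_distrib)
lemma emb_uminus: "emb (- z) = - emb z"
  by (rule mlt_eqI) simp
lemma emb_zero: "emb 0 = 0"
  by (rule mlt_eqI) simp
lemma emb_times: "emb (z * w) = emb z * emb w"
  by (rule mlt_eqI) (simp add: mult.assoc)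
lemma emb_sc: "sc c * emb z = emb (cscale c z)"
  by (rule mlt_eqI) (simp add: cscale_mult_left[symmetric] cscale_mult_right[symmetric])

lemma emb_inj: "emb z = emb w \<Longrightarrow> z = w"
proof -
  assume "emb z = emb w"
  then have "act b (emb z) = act b (emb w)" for b by simp
  then have "b * (z - w) = 0" for b by (simp add: right_diff_distrib)
  then show "z = w" using left_nondeg[of "z - w"] by simp
qed

definition bnd :: "'a::cstar_algebra mlt \<Rightarrow> real \<Rightarrow> bool" where
  "bnd X r \<longleftrightarrow> (\<forall>b. norm (act b X) \<le> r * norm b)"

lemma bndD: "bnd X r \<Longrightarrow> norm (act b X) \<le> r * norm b"
  unfolding bnd_def by blast

lemma bnd_add: "bnd X r \<Longrightarrow> bnd Y s \<Longrightarrow> bnd (X + Y) (r + s)"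
  unfolding bnd_def by (metis (no_types, lifting) act_plus_mlt add_mono distrib_right norm_triangle_le)

lemma bnd_diff: "bnd X r \<Longrightarrow> bnd Y s \<Longrightarrow> bnd (X - Y) (r + s)"
  unfolding bnd_def by (metis (no_types, lifting) act_minus_mlt add_mono distrib_right norm_triangle_le_diff)

lemma bnd_uminus: "bnd X r \<Longrightarrow> bnd (- X) r"
  unfolding bnd_def by simp

lemma bnd_mult: "bnd X r \<Longrightarrow> bnd Y s \<Longrightarrow> 0 \<le> s \<Longrightarrow> bnd (X * Y) (r * s)"
  unfolding bnd_def
proof (intro allI)
  fix b assume X: "\<forall>b. norm (act b X) \<le> r * norm b" and Y: "\<forall>b. norm (act b Y) \<le> s * norm b" and s: "0 \<le> s"
  have "norm (act b (X * Y)) \<le> s * norm (act b X)" using Y by simp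
  also have "\<dots> \<le> s * (r * norm b)" using X s by (simp add: mult_left_mono)
  finally show "norm (act b (X * Y)) \<le> r * s * norm b" by (simp add: ac_simps)
qed

lemma bnd_sc: "bnd (sc c) (cmod c)"
  unfolding bnd_def by (simp add: norm_cscale)

lemma bnd_one: "bnd 1 1"
  unfolding bnd_def by simp

lemma bnd_zero: "bnd 0 0"
  unfolding bnd_def by simp

lemma bnd_mono: "bnd X r \<Longrightarrow> r \<le> r' \<Longrightarrow> bnd X r'"
  unfolding bnd_def by (meson mult_right_mono norm_ge_zero order_trans)

lemma bnd_emb: "bnd (emb z) (norm z)"
  unfolding bnd_def by (simp add: norm_mult_ineq mult.commute)

lemma bnd_nonneg: "bnd X r \<Longrightarrow> X \<noteq> 0 \<Longrightarrow> 0 \<le> r"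
proof (rule ccontr)
  assume b: "bnd X r" and X: "X \<noteq> 0" and r: "\<not> 0 \<le> r"
  have "act b X = 0" for b
  proof -
    have "norm (act b X) \<le> r * norm b" using b by (simp add: bndD)
    also have "\<dots> \<le> 0" using r by (simp add: mult_nonpos_nonneg)
    finally show ?thesis by simp
  qed
  then have "X = 0" by (intro mlt_eqI) simp
  then show False using X by simp
qed

lemma lact_bnd: assumes "bnd X r" shows "norm (lact X b) \<le> r * norm b"
proof (cases "norm (lact X b) = 0")
  case True
  have "0 \<le> norm (act b X)" by simp
  also have "\<dots> \<le> r * norm b" using assms by (rule bndD)
  finally show ?thesis using True by simp
next
  case False
  let ?y = "lact X b"
  have "(norm ?y)^2 = norm (invol ?y * ?y)" by (simp add: cstar_identity)
  also have "\<dots> = norm (act (invol ?y) X * b)" by (simp add: act_lact)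
  also have "\<dots> \<le> norm (act (invol ?y) X) * norm b" by (rule norm_mult_ineq)
  also have "\<dots> \<le> (r * norm ?y) * norm b" using bndD[OF assms, of "invol ?y"]
    by (simp add: mult_right_mono)
  finally have "norm ?y * norm ?y \<le> norm ?y * (r * norm b)" by (simp add: power2_eq_square ac_simps)
  then show ?thesis using False by (simp add: mult_le_cancel_left)
qed


lemma bnd_ustar: assumes "bnd X r" shows "bnd (ustar X) r"
  unfolding bnd_def act_ustar using lact_bnd[OF assms] by (metis norm_invol)

lemma bnd_zero_imp: assumes "\<And>e. e > 0 \<Longrightarrow> bnd X e" shows "X = 0"
proof (rule mlt_eqI)
  fix b
  have "norm (act b X) \<le> e" if "e > 0" for e
  proof -
    have "0 < e / (norm b + 1)" using that by (simp add: add_nonneg_pos)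
    then have "bnd X (e / (norm b + 1))" by (rule assms)
    then have "norm (act b X) \<le> (e / (norm b + 1)) * norm b" by (rule bndD)
    also have "\<dots> \<le> e" using that
      by (simp add: divide_le_eq mult.commute mult_left_mono add_nonneg_pos not_less)
    finally show ?thesis .
  qed
  then have "norm (act b X) = 0"
    by (metis dual_order.antisym field_le_epsilon norm_ge_zero add.left_neutral)
  then show "act b X = act b 0" by simp
qed

lemma emb_bnd_norm: assumes "bnd (emb z) r" "0 \<le> r" shows "norm z \<le> r"
proof (cases "z = 0")
  case True
  then show ?thesis using assms(2) by simp
next
  case False
  have "(norm z)^2 = norm (invol z * z)" by (simp add: cstar_identity)
  also have "\<dots> \<le> r * norm z" using bndD[OF assms(1), of "invol z"] by simp
  finally show ?thesis using False by (simp add: power2_eq_square mult_le_cancel_right)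
qed

lemma unitary_norm: assumes "X * ustar X = 1" shows "norm (act b X) = norm b"
proof -
  let ?y = "act b X"
  have "(norm ?y)^2 = norm (?y * invol ?y)" by (simp add: cstar_identity2)
  also have "?y * invol ?y = act b (X * ustar X) * invol b"
    by (simp add: invol_act act_lact)
  also have "\<dots> = b * invol b" using assms by simp
  finally have "(norm ?y)^2 = (norm b)^2" by (simp add: cstar_identity2)
  then show ?thesis by (simp add: power2_eq_iff_nonneg)
qed

lemma cstar_mlt: assumes "ustar D * D = 0" shows "D = 0"
proof -
  have "act b (ustar D) = 0" for b
  proof -
    let ?y = "act b (ustar D)"
    have "?y * invol ?y = act b (ustar D * D) * invol b"
      by (simp add: invol_act act_lact)
    then have "?y * invol ?y = 0" using assms by simp
    then have "(norm ?y)^2 = 0" by (simp add: cstar_identity2[symmetric])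
    then show ?thesis by simp
  qed
  then have "ustar D = 0" by (intro mlt_eqI) simp
  then show ?thesis by (metis ustar_ustar ustar_zero)
qed

lemma cauchy_from_bnd:
  fixes f :: "nat \<Rightarrow> 'a::cstar_algebra"
  assumes C: "\<And>e. e > 0 \<Longrightarrow> \<exists>N. \<forall>n\<ge>N. \<forall>k\<ge>N. norm (f n - f k) \<le> e * c"
    and c: "0 \<le> c"
  shows "Cauchy f"
proof (rule metric_CauchyI)
  fix e :: real assume e: "e > 0"
  have "e / (2 * (c + 1)) > 0" using e c by (intro divide_pos_pos) auto
  then obtain N where N: "\<forall>n\<ge>N. \<forall>k\<ge>N. norm (f n - f k) \<le> e / (2 * (c + 1)) * c" using C by blast
  show "\<exists>M. \<forall>m\<ge>M. \<forall>n\<ge>M. dist (f m) (f n) < e"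
  proof (intro exI allI impI)
    fix m n assume "m \<ge> N" "n \<ge> N"
    then have "norm (f m - f n) \<le> e / (2 * (c + 1)) * c" using N by blast
    also have "\<dots> < e"
    proof -
      have ce: "0 \<le> c * e" using e c by simp
      have "e / (2 * (c + 1)) * c < e \<longleftrightarrow> 0 < c * e + e * 2" using e c by (simp add: field_simps)
      then show ?thesis using ce e by linarith
    qed
    finally show "dist (f m) (f n) < e" by (simp add: dist_norm)
  qed
qed

lemma mlt_complete:
  fixes Z :: "nat \<Rightarrow> 'a::cstar_algebra mlt"
  assumes C: "\<And>e. e > 0 \<Longrightarrow> \<exists>N. \<forall>n\<ge>N. \<forall>k\<ge>N. bnd (Z n - Z k) e"
  shows "\<exists>Zl. \<forall>e>0. \<exists>N. \<forall>n\<ge>N. bnd (Z n - Zl) e"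
proof -
  have cR: "Cauchy (\<lambda>n. act b (Z n))" for b
  proof (rule cauchy_from_bnd[where c = "norm b"])
    fix e :: real assume "e > 0"
    then obtain N where "\<forall>n\<ge>N. \<forall>k\<ge>N. bnd (Z n - Z k) e" using C by blast
    then show "\<exists>N. \<forall>n\<ge>N. \<forall>k\<ge>N. norm (act b (Z n) - act b (Z k)) \<le> e * norm b"
      by (metis act_minus_mlt bndD)
  qed simp
  have cL: "Cauchy (\<lambda>n. lact (Z n) b)" for b
  proof (rule cauchy_from_bnd[where c = "norm b"])
    fix e :: real assume "e > 0"
    then obtain N where "\<forall>n\<ge>N. \<forall>k\<ge>N. bnd (Z n - Z k) e" using C by blast
    then show "\<exists>N. \<forall>n\<ge>N. \<forall>k\<ge>N. norm (lact (Z n) b - lact (Z k) b) \<le> e * norm b"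
      by (metis lact_minus_mlt lact_bnd)
  qed simp
  define R where "R b = lim (\<lambda>n. act b (Z n))" for b
  define L where "L b = lim (\<lambda>n. lact (Z n) b)" for b
  have R: "(\<lambda>n. act b (Z n)) \<longlonglongrightarrow> R b" for b
    unfolding R_def using cR[of b] by (simp add: Cauchy_convergent_iff convergent_LIMSEQ_iff)
  have L: "(\<lambda>n. lact (Z n) b) \<longlonglongrightarrow> L b" for b
    unfolding L_def using cL[of b] by (simp add: Cauchy_convergent_iff convergent_LIMSEQ_iff)
  have ism: "is_multiplier (L, R)"
    unfolding is_multiplier_def
  proof (intro allI, simp)
    fix a b
    have 1: "(\<lambda>n. a * lact (Z n) b) \<longlonglongrightarrow> a * L b" by (intro tendsto_intros L)
    have 2: "(\<lambda>n. act a (Z n) * b) \<longlonglongrightarrow> R a * b" by (intro tendsto_intros R)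
    show "a * L b = R a * b" using 1 2 by (simp add: act_lact LIMSEQ_unique)
  qed
  define Zl where "Zl = Abs_mlt (L, R)"
  have actZl: "act b Zl = R b" for b unfolding Zl_def by (simp add: act_Abs[OF ism])
  show ?thesis
  proof (rule exI[of _ Zl], intro allI impI)
    fix e :: real assume "e > 0"
    then obtain N where N: "\<forall>n\<ge>N. \<forall>k\<ge>N. bnd (Z n - Z k) e" using C by blast
    show "\<exists>N. \<forall>n\<ge>N. bnd (Z n - Zl) e"
    proof (rule exI[of _ N], intro allI impI)
      fix n assume n: "n \<ge> N"
      show "bnd (Z n - Zl) e"
        unfolding bnd_def
      proof
        fix b
        have lim: "(\<lambda>k. norm (act b (Z n) - act b (Z k))) \<longlonglongrightarrow> norm (act b (Z n) - R b)"
          by (intro tendsto_intros R)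
        have ev: "\<exists>M. \<forall>k\<ge>M. norm (act b (Z n) - act b (Z k)) \<le> e * norm b"
          using N n by (metis act_minus_mlt bndD)
        have "norm (act b (Z n) - R b) \<le> e * norm b"
          using LIMSEQ_le_const2[OF lim ev] .
        then show "norm (act b (Z n - Zl)) \<le> e * norm b" by (simp add: actZl)
      qed
    qed
  qed
qed

lemma baire_closed:
  fixes J :: "'a::{real_normed_vector,complete_space} set" and F :: "nat \<Rightarrow> 'a set"
  assumes J: "closed J" "J \<noteq> {}" and F: "\<And>n. closed (F n)" and cov: "J \<subseteq> (\<Union>n. F n)"
  shows "\<exists>n y r. y \<in> J \<and> r > 0 \<and> ball y r \<inter> J \<subseteq> F n"
proof (rule ccontr)
  assume nex: "\<not> ?thesis"
  let ?X = "top_of_set J"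
  have cm: "completely_metrizable_space ?X"
  proof -
    have ce: "closedin euclidean J" using J(1) closed_closedin by blast
    show ?thesis using completely_metrizable_space_closedin[OF completely_metrizable_space_euclidean ce] .
  qed
  have emp: "?X interior_of (F n \<inter> J) = {}" for n
  proof (rule ccontr)
    assume "?X interior_of (F n \<inter> J) \<noteq> {}"
    then obtain y where y: "y \<in> ?X interior_of (F n \<inter> J)" by blast
    then obtain U where U: "openin ?X U" "y \<in> U" "U \<subseteq> F n \<inter> J"
      unfolding interior_of_def by blast
    from U(1) obtain V where V: "open V" "U = J \<inter> V" unfolding openin_open by blast
    have "y \<in> V" using U(2) V(2) by blast
    then obtain r where r: "r > 0" "ball y r \<subseteq> V" using V(1) open_contains_ball by blast
    have yJ: "y \<in> J" using U(2) V(2) by blast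
    have "ball y r \<inter> J \<subseteq> F n" using r(2) V(2) U(3) by blast
    then have "\<exists>n y r. y \<in> J \<and> r > 0 \<and> ball y r \<inter> J \<subseteq> F n" using yJ r(1) by blast
    then show False using nex by simp
  qed
  have "?X interior_of \<Union>(range (\<lambda>n. F n \<inter> J)) = {}"
  proof (rule Baire_category_alt)
    show "completely_metrizable_space ?X \<or> locally_compact_space ?X \<and> regular_space ?X"
      using cm by (rule disjI1)
    show "countable (range (\<lambda>n. F n \<inter> J))" by (rule countable_image) simp
    fix T assume "T \<in> range (\<lambda>n. F n \<inter> J)"
    then obtain n where T: "T = F n \<inter> J" by blast
    show "closedin ?X T \<and> ?X interior_of T = {}"
      using T F[of n] emp[of n] closedin_closed_Int[of "F n" J] by (simp add: Int_commute)
  qed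
  moreover have "\<Union>(range (\<lambda>n. F n \<inter> J)) = J" using cov by blast
  ultimately have "?X interior_of J = {}" by simp
  moreover have "?X interior_of J = J"
    using interior_of_topspace[of ?X] by simp
  ultimately show False using J(2) by simp
qed


lemma lact_scaleR: "lact X (scaleR t b) = scaleR t (lact X b)"
  using lact_cscale[of X "complex_of_real t" b] by (simp add: cscale_of_real)

lemma mlt_bounded: "\<exists>K\<ge>0. bnd (X::'a::cstar_algebra mlt) K"
proof -
  define F where "F n = {a::'a. \<forall>b. norm b \<le> 1 \<longrightarrow> norm (a * lact X b) \<le> real n}" for n
  have clF: "closed (F n)" for n
  proof -
    have "F n = (\<Inter>b\<in>{b. norm b \<le> 1}. {a. norm (a * lact X b) \<le> real n})"
      unfolding F_def by blast
    moreover have "closed {a. norm (a * lact X b) \<le> real n}" for b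
      by (intro closed_Collect_le continuous_intros)
    ultimately show ?thesis by (simp add: closed_INT)
  qed
  have cov: "(UNIV::'a set) \<subseteq> (\<Union>n. F n)"
  proof
    fix a :: 'a
    obtain n where n: "norm (act a X) \<le> real n" using real_arch_simple by blast
    have "a \<in> F n" unfolding F_def
    proof (intro CollectI allI impI)
      fix b :: 'a assume b: "norm b \<le> 1"
      have "norm (a * lact X b) = norm (act a X * b)" by (simp add: act_lact)
      also have "\<dots> \<le> norm (act a X) * norm b" by (rule norm_mult_ineq)
      also have "\<dots> \<le> norm (act a X)" using b by (intro mult_left_le) simp_all
      finally show "norm (a * lact X b) \<le> real n" using n by simp
    qed
    then show "a \<in> (\<Union>n. F n)" by blast
  qed
  obtain n y0 r where y0: "r > 0" "ball y0 r \<inter> UNIV \<subseteq> F n"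
    using baire_closed[OF closed_UNIV _ clF cov] by blast
  have small: "norm (a * lact X b) \<le> 2 * real n" if "norm a < r" "norm b \<le> 1" for a b
  proof -
    have "y0 + a \<in> F n" "y0 \<in> F n" using y0 that by (auto simp: dist_norm)
    then have "norm ((y0 + a) * lact X b) \<le> real n" "norm (y0 * lact X b) \<le> real n"
      unfolding F_def using that by auto
    moreover have "a * lact X b = (y0 + a) * lact X b - y0 * lact X b" by (simp add: algebra_simps)
    ultimately show ?thesis by (metis norm_triangle_le_diff add_mono mult_2)
  qed
  define K where "K = 4 * real n / r"
  have K0: "K \<ge> 0" unfolding K_def using y0 by simp
  have gen: "norm (a * lact X b) \<le> K * norm a * norm b" for a b
  proof (cases "a = 0 \<or> b = 0")
    case True then show ?thesis by auto
  next
    case False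
    then have na: "norm a > 0" and nb: "norm b > 0" by auto
    define t where "t = r / (2 * norm a)"
    define u where "u = 1 / norm b"
    have t: "t > 0" unfolding t_def using na y0 by simp
    have u: "u > 0" unfolding u_def using nb by simp
    have "norm (scaleR t a) < r" using na y0 by (simp add: t_def)
    moreover have "norm (scaleR u b) \<le> 1" using nb by (simp add: u_def)
    ultimately have "norm (scaleR t a * lact X (scaleR u b)) \<le> 2 * real n" by (rule small)
    also have "scaleR t a * lact X (scaleR u b) = scaleR (t * u) (a * lact X b)"
      by (simp add: lact_scaleR)
    finally have "t * u * norm (a * lact X b) \<le> 2 * real n" using t u by simp
    then have "norm (a * lact X b) \<le> 2 * real n / (t * u)" using t u by (simp add: field_simps)
    also have "2 * real n / (t * u) = K * norm a * norm b"
      unfolding K_def t_def u_def using na nb y0 by (simp add: field_simps)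
    finally show ?thesis .
  qed
  have "bnd X K" unfolding bnd_def
  proof
    fix a :: 'a
    let ?y = "act a X"
    show "norm ?y \<le> K * norm a"
    proof (cases "norm ?y = 0")
      case True then show ?thesis using K0 by simp
    next
      case False
      have "(norm ?y)^2 = norm (?y * invol ?y)" by (simp add: cstar_identity2)
      also have "\<dots> = norm (a * lact X (invol ?y))" by (simp add: act_lact)
      also have "\<dots> \<le> K * norm a * norm ?y" using gen[of a "invol ?y"] by simp
      finally have "norm ?y * norm ?y \<le> (K * norm a) * norm ?y" by (simp add: power2_eq_square)
      then show ?thesis using False by (simp add: mult_le_cancel_right)
    qed
  qed
  then show ?thesis using K0 by blast
qed

lemma open_map_lite:
  fixes m :: "'a::cstar_algebra mlt"
  assumes cl: "closed (range (\<lambda>a. act a m))"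
  shows "\<exists>M\<ge>0. \<forall>y\<in>range (\<lambda>a. act a m). \<forall>e>0. \<exists>a. norm a \<le> M * norm y \<and> norm (act a m - y) < e"
proof -
  let ?J = "range (\<lambda>a. act a m)"
  define F where "F n = closure ((\<lambda>a. act a m) ` cball 0 (real n))" for n
  have clF: "closed (F n)" for n unfolding F_def by simp
  have cov: "?J \<subseteq> (\<Union>n. F n)"
  proof
    fix y assume "y \<in> ?J"
    then obtain a where a: "y = act a m" by blast
    obtain n where n: "norm a \<le> real n" using real_arch_simple by blast
    have "y \<in> F n" unfolding F_def using a n by (intro closure_subset[THEN subsetD]) auto
    then show "y \<in> (\<Union>n. F n)" by blast
  qed
  have "act 0 m \<in> ?J" by (rule rangeI)
  then have ne: "?J \<noteq> {}" by (intro notI) simp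
  obtain n y0 r where y0: "y0 \<in> ?J" "r > 0" "ball y0 r \<inter> ?J \<subseteq> F n"
    using baire_closed[OF cl ne clF cov] by blast
  have Jadd: "u + v \<in> ?J" if uv: "u \<in> ?J" "v \<in> ?J" for u v
  proof -
    obtain a b where "u = act a m" "v = act b m" using uv by blast
    then have "u + v = act (a + b) m" by simp
    then show ?thesis by (rule range_eqI)
  qed
  have approx: "\<exists>a\<in>cball 0 (real n). norm (act a m - u) < e" if uF: "u \<in> F n" "e > 0" for u e
  proof -
    have "u \<in> closure ((\<lambda>a. act a m) ` cball 0 (real n))" using uF(1) unfolding F_def .
    then have "\<forall>e>0. \<exists>v\<in>(\<lambda>a. act a m) ` cball 0 (real n). dist v u < e"
      by (simp only: closure_approachable)
    then obtain v where v: "v \<in> (\<lambda>a. act a m) ` cball 0 (real n)" "dist v u < e"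
      using uF(2) by blast
    then obtain a where a: "a \<in> cball 0 (real n)" "v = act a m" by blast
    show ?thesis using a v by (intro bexI[of _ a]) (simp_all add: dist_norm)
  qed
  have small: "\<exists>a. norm a \<le> 2 * real n \<and> norm (act a m - y) < e"
    if yJ: "y \<in> ?J" and ny: "norm y < r" and e: "e > 0" for y e
  proof -
    have "y0 + y \<in> ?J" using Jadd[OF y0(1) yJ] .
    moreover have "y0 + y \<in> ball y0 r" using ny by (simp add: dist_norm)
    ultimately have "y0 + y \<in> F n" using y0(3) by blast
    then have "\<exists>a\<in>cball 0 (real n). norm (act a m - (y0 + y)) < e/2" using e by (intro approx) simp_all
    then obtain a1 where a1: "norm a1 \<le> real n" "norm (act a1 m - (y0 + y)) < e/2"
      by (auto simp: mem_cball_0)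
    have "y0 \<in> ball y0 r" using y0(2) by simp
    then have "y0 \<in> F n" using y0(1,3) by blast
    then have "\<exists>a\<in>cball 0 (real n). norm (act a m - y0) < e/2" using e by (intro approx) simp_all
    then obtain a2 where a2: "norm a2 \<le> real n" "norm (act a2 m - y0) < e/2"
      by (auto simp: mem_cball_0)
    have "norm (a1 - a2) \<le> norm a1 + norm a2" by (rule norm_triangle_ineq4)
    then have "norm (a1 - a2) \<le> 2 * real n" using a1 a2 by linarith
    moreover have "norm (act (a1 - a2) m - y) < e"
    proof -
      have "act (a1 - a2) m - y = (act a1 m - (y0 + y)) - (act a2 m - y0)" by (simp add: algebra_simps)
      then have "norm (act (a1 - a2) m - y) \<le> norm (act a1 m - (y0 + y)) + norm (act a2 m - y0)"
        by (metis norm_triangle_ineq4)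
      then show ?thesis using a1 a2 by linarith
    qed
    ultimately show ?thesis by blast
  qed
  define M where "M = 4 * real n / r"
  have M0: "M \<ge> 0" unfolding M_def using y0 by simp
  have "\<forall>y\<in>?J. \<forall>e>0. \<exists>a. norm a \<le> M * norm y \<and> norm (act a m - y) < e"
  proof (intro ballI allI impI)
    fix y e assume yJ: "y \<in> ?J" and e: "(e::real) > 0"
    show "\<exists>a. norm a \<le> M * norm y \<and> norm (act a m - y) < e"
    proof (cases "y = 0")
      case True
      then show ?thesis using e by (intro exI[of _ 0]) simp
    next
      case False
      then have ny: "norm y > 0" by simp
      define t where "t = r / (2 * norm y)"
      have t: "t > 0" unfolding t_def using ny y0 by simp
      have tyJ: "scaleR t y \<in> ?J"
      proof -
        obtain b where "y = act b m" using yJ by blast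
        then have "scaleR t y = act (scaleR t b) m" by simp
        then show ?thesis by blast
      qed
      have "norm (scaleR t y) < r" using ny y0 t by (simp add: t_def)
      then obtain a where a: "norm a \<le> 2 * real n" "norm (act a m - scaleR t y) < e * t"
        using small[OF tyJ _ mult_pos_pos[OF e t]] by blast
      have "norm (scaleR (1/t) a) \<le> M * norm y"
        using a(1) t ny y0 by (simp add: M_def t_def field_simps)
      moreover have "norm (act (scaleR (1/t) a) m - y) < e"
      proof -
        have "act (scaleR (1/t) a) m - y = scaleR (1/t) (act a m - scaleR t y)"
          using t by (simp add: algebra_simps)
        then have "norm (act (scaleR (1/t) a) m - y) = norm (act a m - scaleR t y) / t"
          using t by simp
        also have "\<dots> < e" using a(2) t by (simp add: field_simps)
        finally show ?thesis .
      qed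
      ultimately show ?thesis by blast
    qed
  qed
  then show ?thesis using M0 by blast
qed

lemma bdd_below:
  fixes m :: "'a::cstar_algebra mlt"
  assumes cl: "closed (range (\<lambda>a. act a m))"
  shows "\<exists>M\<ge>0. \<forall>y\<in>range (\<lambda>a. act a m). norm y \<le> M * norm (act y (ustar m * m))"
proof -
  obtain M where M0: "M \<ge> 0" and M: "\<forall>y\<in>range (\<lambda>a. act a m). \<forall>e>0. \<exists>a. norm a \<le> M * norm y \<and> norm (act a m - y) < e"
    using open_map_lite[OF cl] by blast
  have step1: "norm y \<le> M * norm (act y (ustar m))" if yJ: "y \<in> range (\<lambda>a. act a m)" for y
  proof (cases "y = 0")
    case True then show ?thesis using M0 by simp
  next
    case False
    then have ny: "norm y > 0" by simp
    have key: "(norm y)^2 \<le> M * norm (act y (ustar m)) * norm y + norm y * e" if e: "e > 0" for e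
    proof -
      obtain a where a: "norm a \<le> M * norm y" "norm (act a m - y) < e" using M yJ e by blast
      have "(norm y)^2 = norm (y * invol y)" by (simp add: cstar_identity2)
      also have "y * invol y = y * invol (act a m) - y * invol (act a m - y)"
        by (simp add: invol_diff algebra_simps)
      also have "y * invol (act a m) = act y (ustar m) * invol a"
        by (simp add: invol_act act_lact)
      finally have "(norm y)^2 \<le> norm (act y (ustar m) * invol a) + norm (y * invol (act a m - y))"
        by (metis norm_triangle_ineq4)
      also have "norm (act y (ustar m) * invol a) \<le> norm (act y (ustar m)) * (M * norm y)"
      proof -
        have "norm (act y (ustar m) * invol a) \<le> norm (act y (ustar m)) * norm (invol a)"
          by (rule norm_mult_ineq)
        also have "\<dots> \<le> norm (act y (ustar m)) * (M * norm y)"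
          using a(1) by (simp add: mult_left_mono)
        finally show ?thesis .
      qed
      also have "norm (y * invol (act a m - y)) \<le> norm y * e"
      proof -
        have "norm (y * invol (act a m - y)) \<le> norm y * norm (invol (act a m - y))"
          by (rule norm_mult_ineq)
        also have "\<dots> \<le> norm y * e"
          using a(2) by (simp add: mult_left_mono)
        finally show ?thesis .
      qed
      finally show ?thesis by (simp add: ac_simps)
    qed
    have "(norm y)^2 \<le> M * norm (act y (ustar m)) * norm y"
    proof (rule field_le_epsilon)
      fix e :: real assume e: "0 < e"
      have "(norm y)^2 \<le> M * norm (act y (ustar m)) * norm y + norm y * (e / norm y)"
        using key[of "e / norm y"] e ny by simp
      then show "(norm y)^2 \<le> M * norm (act y (ustar m)) * norm y + e" using ny by simp
    qed
    then show ?thesis using ny by (simp add: power2_eq_square mult_le_cancel_right)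
  qed
  show ?thesis
  proof (intro exI[of _ "M * M"] conjI ballI)
    show "M * M \<ge> 0" using M0 by simp
    fix y assume yJ: "y \<in> range (\<lambda>a. act a m)"
    let ?z = "act y (ustar m)"
    have "(norm ?z)^2 = norm (?z * invol ?z)" by (simp add: cstar_identity2)
    also have "?z * invol ?z = act y (ustar m * m) * invol y"
      by (simp add: invol_act act_lact)
    finally have z2: "(norm ?z)^2 \<le> norm (act y (ustar m * m)) * norm y"
      by (metis norm_invol norm_mult_ineq)
    have "(norm y)^2 \<le> (M * norm ?z)^2"
      using step1[OF yJ] by (simp add: power_mono)
    also have "\<dots> = M * M * (norm ?z)^2" by (simp add: power2_eq_square)
    also have "\<dots> \<le> M * M * (norm (act y (ustar m * m)) * norm y)"
      using z2 M0 by (simp add: mult_left_mono)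
    finally have "norm y * norm y \<le> (M * M * norm (act y (ustar m * m))) * norm y"
      by (simp add: power2_eq_square ac_simps)
    then show "norm y \<le> M * M * norm (act y (ustar m * m))"
      by (cases "norm y = 0") (simp_all add: mult_le_cancel_right)
  qed
qed

lemma geom_tele: "(\<Sum>k<n. X^k) * (1 - X) = 1 - (X::'a::cstar_algebra mlt)^n"
proof (induction n)
  case 0 then show ?case by simp
next
  case (Suc n)
  have "(\<Sum>k<Suc n. X^k) * (1 - X) = (\<Sum>k<n. X^k) * (1 - X) + X^n * (1 - X)"
    by (simp add: distrib_right)
  also have "\<dots> = 1 - X^Suc n" using Suc by (simp add: algebra_simps power_Suc2 power_commutes)
  finally show ?case .
qed

lemma bnd_power: "bnd X r \<Longrightarrow> 0 \<le> r \<Longrightarrow> bnd (X^n) (r^n)"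
proof (induction n)
  case 0 then show ?case by (simp add: bnd_one)
next
  case (Suc n)
  then have "bnd (X^n * X) (r^n * r)" by (intro bnd_mult) simp_all
  then show ?case by (simp add: power_commutes mult.commute)
qed

lemma unitary_bnd: assumes "X * ustar X = 1" shows "bnd X 1"
  unfolding bnd_def by (simp add: unitary_norm[OF assms])

lemma unitary_mult: assumes "X * ustar X = 1" "Y * ustar Y = 1" shows "(X * Y) * ustar (X * Y) = 1"
proof -
  have "(X * Y) * ustar (X * Y) = X * (Y * ustar Y) * ustar X" by (simp add: ustar_times mult.assoc)
  then show ?thesis using assms by simp
qed

lemma unitary_power: "X * ustar X = 1 \<Longrightarrow> X^n * ustar (X^n) = 1"
proof (induction n)
  case 0 then show ?case by simp
next
  case (Suc n) then show ?case using unitary_mult[of X "X^n"] by simp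
qed

lemma sc_mult_left: "sc c * (sc d * X) = sc (c * d) * X"
  by (simp add: sc_mult mult.assoc)

lemma act_in_closed:
  fixes Z :: "nat \<Rightarrow> 'a::cstar_algebra mlt"
  assumes J: "closed J" and conv: "\<forall>e>0. \<exists>N. \<forall>n\<ge>N. bnd (Z n - Zl) e"
    and inJ: "\<And>n. act c (Z n) \<in> J"
  shows "act c Zl \<in> J"
proof -
  have "act c Zl \<in> closure J"
    unfolding closure_approachable
  proof (intro allI impI)
    fix e :: real assume e: "e > 0"
    have "e / (norm c + 1) > 0" using e by (simp add: add_nonneg_pos)
    then obtain N where N: "\<forall>n\<ge>N. bnd (Z n - Zl) (e / (norm c + 1))" using conv by blast
    then have "norm (act c (Z N) - act c Zl) \<le> e / (norm c + 1) * norm c"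
      by (metis act_minus_mlt bndD order_refl)
    also have "\<dots> < e"
    proof -
      have p: "e / (norm c + 1) > 0" using e by (simp add: add_nonneg_pos)
      have "e / (norm c + 1) * norm c < e / (norm c + 1) * (norm c + 1)"
        using p by (intro mult_strict_left_mono) simp_all
      also have "\<dots> = e"
      proof -
        have "norm c + 1 \<noteq> 0" by (metis add_nonneg_pos norm_ge_zero zero_less_one less_irrefl)
        then show ?thesis by simp
      qed
      finally show ?thesis .
    qed
    finally show "\<exists>y\<in>J. dist y (act c Zl) < e" using inJ[of N] by (auto simp: dist_norm)
  qed
  then show ?thesis using J by simp
qed

locale core =
  fixes m :: "'a::cstar_algebra mlt" and Q :: "'a mlt set"
  assumes clJ: "closed (range (\<lambda>a. act a m))"
    and Qm: "m \<in> Q"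
    and Qadd: "X \<in> Q \<Longrightarrow> Y \<in> Q \<Longrightarrow> X + Y \<in> Q"
    and Qmult: "X \<in> Q \<Longrightarrow> Y \<in> Q \<Longrightarrow> X * Y \<in> Q"
    and Qsc: "X \<in> Q \<Longrightarrow> sc c * X \<in> Q"
    and Qstar: "X \<in> Q \<Longrightarrow> ustar X \<in> Q"
    and Qlim: "(\<And>n. (Z::nat \<Rightarrow> 'a mlt) n \<in> Q) \<Longrightarrow> \<forall>e>0. \<exists>N. \<forall>n\<ge>N. bnd (Z n - Zl) e \<Longrightarrow> Zl \<in> Q"
begin

definition J where "J = range (\<lambda>a. act a m)"

definition QP where "QP = {X\<in>Q. (\<forall>c. act c X \<in> J) \<and> (\<forall>c. act c (ustar X) \<in> J)}"

lemma J_closed: "closed J" unfolding J_def by (rule clJ)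

lemma J_add: assumes "u \<in> J" "v \<in> J" shows "u + v \<in> J"
proof -
  obtain a b where "u = act a m" "v = act b m" using assms unfolding J_def by blast
  then have "u + v = act (a + b) m" by simp
  then show ?thesis unfolding J_def by (rule range_eqI)
qed

lemma J_cscale: assumes "u \<in> J" shows "cscale c u \<in> J"
proof -
  obtain a where "u = act a m" using assms unfolding J_def by blast
  then have "cscale c u = act (cscale c a) m" by simp
  then show ?thesis unfolding J_def by (rule range_eqI)
qed

lemma J_act: "act c m \<in> J"
  unfolding J_def by (rule rangeI)

lemma QP_add: assumes "X \<in> QP" "Y \<in> QP" shows "X + Y \<in> QP"
proof -
  have "X \<in> Q" "Y \<in> Q" "act c X \<in> J" "act c Y \<in> J" "act c (ustar X) \<in> J" "act c (ustar Y) \<in> J" for c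
    using assms unfolding QP_def by blast+
  then show ?thesis unfolding QP_def by (simp add: Qadd ustar_plus J_add)
qed

lemma QP_mult: assumes "X \<in> QP" "Y \<in> QP" shows "X * Y \<in> QP"
proof -
  have "X \<in> Q" "Y \<in> Q" "act c X \<in> J" "act c Y \<in> J" "act c (ustar X) \<in> J" "act c (ustar Y) \<in> J" for c
    using assms unfolding QP_def by blast+
  then show ?thesis unfolding QP_def by (simp add: Qmult ustar_times)
qed

lemma QP_sc: assumes "X \<in> QP" shows "sc c * X \<in> QP"
proof -
  have "X \<in> Q" "act c' X \<in> J" "act c' (ustar X) \<in> J" for c'
    using assms unfolding QP_def by blast+
  then show ?thesis unfolding QP_def by (simp add: Qsc ustar_times ustar_sc J_cscale)
qed

lemma QP_star: assumes "X \<in> QP" shows "ustar X \<in> QP"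
proof -
  have "X \<in> Q" "act c X \<in> J" "act c (ustar X) \<in> J" for c
    using assms unfolding QP_def by blast+
  then show ?thesis unfolding QP_def by (simp add: Qstar)
qed

lemma QP_uminus: "X \<in> QP \<Longrightarrow> - X \<in> QP"
proof -
  assume "X \<in> QP"
  then have "sc (-1) * X \<in> QP" by (rule QP_sc)
  moreover have "sc (-1) * X = - X" by (rule mlt_eqI) (simp add: cscale_minus_left cscale_one)
  ultimately show ?thesis by simp
qed

lemma QP_diff: assumes "X \<in> QP" "Y \<in> QP" shows "X - Y \<in> QP"
proof -
  have "X + (- Y) \<in> QP" using assms by (intro QP_add QP_uminus)
  then show ?thesis by (simp only: diff_conv_add_uminus)
qed

lemma QP_zero: "0 \<in> QP"
proof -
  have "m \<in> Q" by (rule Qm)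
  then have "sc 0 * m \<in> Q" by (rule Qsc)
  then have "0 \<in> Q" by simp
  moreover have "act c 0 \<in> J" for c using J_act[of 0] by simp
  ultimately show ?thesis unfolding QP_def by simp
qed

lemma QP_sum: "(\<And>k. k \<in> A \<Longrightarrow> f k \<in> QP) \<Longrightarrow> sum f A \<in> QP"
proof (induction A rule: infinite_finite_induct)
  case (infinite A) then show ?case by (simp add: QP_zero)
next
  case empty then show ?case by (simp add: QP_zero)
next
  case (insert x F) then show ?case by (simp add: QP_add)
qed

lemma QP_lim: "(\<And>n. (Z::nat \<Rightarrow> 'a mlt) n \<in> QP) \<Longrightarrow> \<forall>e>0. \<exists>N. \<forall>n\<ge>N. bnd (Z n - Zl) e \<Longrightarrow> Zl \<in> QP"
proof -
  assume Z: "\<And>n. Z n \<in> QP" and conv: "\<forall>e>0. \<exists>N. \<forall>n\<ge>N. bnd (Z n - Zl) e"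
  have "Z n \<in> Q" for n using Z unfolding QP_def by blast
  then have "Zl \<in> Q" using conv by (rule Qlim)
  moreover have "act c Zl \<in> J" for c
    using act_in_closed[OF J_closed conv] Z unfolding QP_def by blast
  moreover have "act c (ustar Zl) \<in> J" for c
  proof (rule act_in_closed[OF J_closed])
    show "\<forall>e>0. \<exists>N. \<forall>n\<ge>N. bnd (ustar (Z n) - ustar Zl) e"
      using conv by (metis bnd_ustar ustar_minus)
    show "act c (ustar (Z n)) \<in> J" for n using Z unfolding QP_def by blast
  qed
  ultimately show ?thesis unfolding QP_def by blast
qed

lemma h_QP: "ustar m * m \<in> QP"
proof -
  have "ustar m * m \<in> Q" by (intro Qmult Qstar Qm)
  moreover have "act c (ustar m * m) \<in> J" for c by (simp add: J_act)
  moreover have "ustar (ustar m * m) = ustar m * m" by (simp add: ustar_times)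
  ultimately show ?thesis unfolding QP_def by (simp add: J_act)
qed

end

lemma pow_half_small: "e > 0 \<Longrightarrow> \<exists>N. \<forall>n\<ge>N. (1/2::real)^n < e"
proof -
  assume e: "e > 0"
  obtain N where N: "(1/2::real)^N < e" using real_arch_pow_inv[OF e, of "1/2"] by auto
  have "(1/2::real)^n \<le> (1/2)^N" if "n \<ge> N" for n
    using that by (intro power_decreasing) simp_all
  then show ?thesis using N by (meson order_le_less_trans)
qed

lemma commute_power: "X * Y = Y * X \<Longrightarrow> X^n * Y = Y * (X::'a::cstar_algebra mlt)^n"
proof (induction n)
  case 0 then show ?case by simp
next
  case (Suc n)
  have "X^Suc n * Y = X * (X^n * Y)" by (simp add: mult.assoc)
  also have "\<dots> = X * Y * X^n" by (simp only: Suc.IH[OF Suc.prems] mult.assoc)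
  also have "\<dots> = (Y * X) * X^n" using Suc.prems by simp
  also have "\<dots> = Y * X^Suc n" by (simp add: mult.assoc)
  finally show ?case .
qed

lemma bnd_sum: "(\<And>k. k \<in> A \<Longrightarrow> bnd (f k) (r k)) \<Longrightarrow> bnd (sum f A) (sum r A)"
proof (induction A rule: infinite_finite_induct)
  case (infinite A) then show ?case by (simp add: bnd_zero)
next
  case empty then show ?case by (simp add: bnd_zero)
next
  case (insert x F) then show ?case by (simp add: bnd_add)
qed

locale core2 = core +
  fixes s :: "'a mlt" and t \<kappa> :: real
  assumes s_def: "s = sc (complex_of_real t) * (ustar m * m)" and t_pos: "t > 0"
    and s_bnd: "bnd s (1/2)" and kappa: "\<kappa> \<ge> 0"
    and s_below: "\<And>y. y \<in> J \<Longrightarrow> norm y \<le> \<kappa> * norm (act y s)"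
begin

lemma s_QP: "s \<in> QP"
  unfolding s_def by (intro QP_sc h_QP)

lemma s_star: "ustar s = s"
  unfolding s_def by (simp add: ustar_times ustar_sc sc_commute)

definition T where "T = sc \<i> * s"

lemma T_QP: "T \<in> QP" unfolding T_def by (intro QP_sc s_QP)

lemma T_bnd: "bnd T (1/2)"
proof -
  have "bnd (sc \<i> * s) (cmod \<i> * (1/2))" using bnd_mult[OF bnd_sc[of "\<i>"] s_bnd] by simp
  then show ?thesis unfolding T_def by simp
qed

lemma T_comm: "T * s = s * T"
proof -
  have "s * (sc \<i> * s) = (s * sc \<i>) * s" by (simp add: mult.assoc)
  also have "\<dots> = (sc \<i> * s) * s" by (simp add: sc_commute)
  finally show ?thesis unfolding T_def by simp
qed

lemma Tpow_QP: "T^Suc k \<in> QP"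
proof (induction k)
  case 0 then show ?case using T_QP by simp
next
  case (Suc k) then show ?case using QP_mult[OF T_QP] by (simp only: power_Suc)
qed

lemma Tpow_bnd: "bnd (T^k) ((1/2)^k)"
  using bnd_power[OF T_bnd] by simp

definition vs where "vs n = (\<Sum>k<n. T^Suc k)"

lemma vs_QP: "vs n \<in> QP"
  unfolding vs_def by (intro QP_sum Tpow_QP)

lemma vs_Suc: "vs (Suc n) = vs n + T^Suc n"
  unfolding vs_def by simp

lemma vs_right: "(1 + vs n) * (1 - T) = 1 - T^Suc n"
proof (induction n)
  case 0 then show ?case by (simp add: vs_def)
next
  case (Suc n)
  have "(1 + vs (Suc n)) * (1 - T) = (1 + vs n) * (1 - T) + T^Suc n * (1 - T)"
    by (simp add: vs_Suc algebra_simps)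
  also have "\<dots> = 1 - T^Suc (Suc n)" using Suc by (simp add: algebra_simps power_Suc2[symmetric])
  finally show ?case .
qed

lemma vs_left: "(1 - T) * (1 + vs n) = 1 - T^Suc n"
proof (induction n)
  case 0 then show ?case by (simp add: vs_def)
next
  case (Suc n)
  have "(1 - T) * (1 + vs (Suc n)) = (1 - T) * (1 + vs n) + (1 - T) * T^Suc n"
    by (simp add: vs_Suc algebra_simps)
  also have "\<dots> = 1 - T^Suc (Suc n)" using Suc by (simp add: algebra_simps)
  finally show ?case .
qed

lemma vs_comm: "vs n * s = s * vs n"
proof (induction n)
  case 0 then show ?case by (simp add: vs_def)
next
  case (Suc n)
  have "vs (Suc n) * s = vs n * s + T^Suc n * s" by (simp only: vs_Suc distrib_right)
  also have "\<dots> = s * vs n + s * T^Suc n" by (simp only: Suc commute_power[OF T_comm])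
  also have "\<dots> = s * vs (Suc n)" by (simp only: vs_Suc distrib_left)
  finally show ?case .
qed

lemma vs_diff_bnd: "bnd (vs (k + d) - vs k) ((1/2)^k - (1/2)^(k+d))"
proof (induction d)
  case 0 then show ?case by (simp add: bnd_zero)
next
  case (Suc d)
  have eq: "vs (k + Suc d) - vs k = (vs (k + d) - vs k) + T^Suc (k + d)"
    by (simp add: vs_Suc)
  have b: "bnd ((vs (k + d) - vs k) + T^Suc (k + d)) (((1/2)^k - (1/2)^(k+d)) + (1/2)^Suc (k+d))"
    by (rule bnd_add[OF Suc.IH Tpow_bnd])
  have "bnd (vs (k + Suc d) - vs k) (((1/2)^k - (1/2)^(k+d)) + (1/2)^Suc (k+d))"
    by (subst eq) (rule b)
  moreover have "((1/2::real)^k - (1/2)^(k+d)) + (1/2)^Suc (k+d) = (1/2)^k - (1/2)^(k + Suc d)"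
    by simp
  ultimately show ?case by simp
qed

lemma vs_cauchy_bnd: assumes "n \<ge> N" "k \<ge> N" shows "bnd (vs n - vs k) ((1/2)^N)"
proof -
  have gen: "bnd (vs n - vs k) ((1/2)^N)" if nk: "n \<ge> k" "k \<ge> N" for n k
  proof -
    obtain d where d: "n = k + d" using le_Suc_ex[OF nk(1)] by blast
    have "bnd (vs n - vs k) ((1/2)^k - (1/2)^(k+d))" using vs_diff_bnd d by simp
    moreover have "(1/2::real)^k - (1/2)^(k+d) \<le> (1/2)^N"
    proof -
      have "(1/2::real)^k \<le> (1/2)^N" using nk by (intro power_decreasing) simp_all
      moreover have "(0::real) \<le> (1/2)^(k+d)" by simp
      ultimately show ?thesis by linarith
    qed
    ultimately show ?thesis by (rule bnd_mono)
  qed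
  show ?thesis
  proof (cases "n \<ge> k")
    case True show ?thesis by (rule gen[OF True assms(2)])
  next
    case False
    then have "bnd (vs k - vs n) ((1/2)^N)" using gen[of n k] assms by simp
    then have "bnd (- (vs k - vs n)) ((1/2)^N)" by (rule bnd_uminus)
    then show ?thesis by simp
  qed
qed

lemma vs_limit: "\<exists>v. \<forall>e>0. \<exists>N. \<forall>n\<ge>N. bnd (vs n - v) e"
proof (rule mlt_complete)
  fix e :: real assume "e > 0"
  then obtain N where N: "\<forall>n\<ge>N. (1/2::real)^n < e" using pow_half_small by blast
  show "\<exists>N. \<forall>n\<ge>N. \<forall>k\<ge>N. bnd (vs n - vs k) e"
  proof (intro exI[of _ N] allI impI)
    fix n k assume "n \<ge> N" "k \<ge> N"
    then have "bnd (vs n - vs k) ((1/2)^N)" by (rule vs_cauchy_bnd)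
    moreover have "(1/2::real)^N \<le> e" using N by (meson less_imp_le order_refl)
    ultimately show "bnd (vs n - vs k) e" by (rule bnd_mono)
  qed
qed

end

context core2
begin

definition v where "v = (SOME v. \<forall>e>0. \<exists>N. \<forall>n\<ge>N. bnd (vs n - v) e)"

lemma v_conv: "\<forall>e>0. \<exists>N. \<forall>n\<ge>N. bnd (vs n - v) e"
  unfolding v_def using someI_ex[OF vs_limit] .

lemma v_QP: "v \<in> QP"
  using QP_lim[OF vs_QP v_conv] .

lemma v_close: "e > 0 \<Longrightarrow> \<exists>N. \<forall>n\<ge>N. bnd (v - vs n) e"
proof -
  assume "e > 0"
  then obtain N where N: "\<forall>n\<ge>N. bnd (vs n - v) e" using v_conv by blast
  have "bnd (v - vs n) e" if "n \<ge> N" for n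
  proof -
    have "bnd (- (vs n - v)) e" using N that by (intro bnd_uminus) simp
    then show ?thesis by simp
  qed
  then show ?thesis by blast
qed

lemma lim_identity:
  assumes eq: "\<And>n. X = P n + R n"
    and small: "\<And>e. e > 0 \<Longrightarrow> \<exists>n. bnd (P n) (e/2) \<and> bnd (R n) (e/2)"
  shows "X = 0"
proof (rule bnd_zero_imp)
  fix e :: real assume "e > 0"
  then obtain n where n: "bnd (P n) (e/2)" "bnd (R n) (e/2)" using small by blast
  have "bnd (P n + R n) (e/2 + e/2)" by (rule bnd_add[OF n])
  then show "bnd X e" using eq[of n] by simp
qed

lemma A_bnd: "bnd (1 - T) (3/2)"
  using bnd_diff[OF bnd_one T_bnd] by simp

lemma small_pair:
  assumes "e > 0"
  shows "\<exists>n. (1/2::real)^n < e \<and> bnd (v - vs n) e"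
proof -
  obtain N1 where N1: "\<forall>n\<ge>N1. (1/2::real)^n < e" using pow_half_small assms by blast
  obtain N2 where N2: "\<forall>n\<ge>N2. bnd (v - vs n) e" using v_close assms by blast
  show ?thesis using N1 N2 by (intro exI[of _ "max N1 N2"]) simp
qed

lemma N_right: "(1 + v) * (1 - T) = 1"
proof -
  have "(1 + v) * (1 - T) - 1 = - (T^Suc n) + (v - vs n) * (1 - T)" for n
  proof -
    have "(1 + v) * (1 - T) = (1 + vs n) * (1 - T) + (v - vs n) * (1 - T)"
      by (simp add: algebra_simps)
    then show ?thesis by (simp add: vs_right)
  qed
  then show ?thesis
  proof (rule lim_identity[where X = "(1 + v) * (1 - T) - 1", simplified])
    fix e :: real assume e: "e > 0"
    then obtain n where n0: "(1/2::real)^n < e/3" "bnd (v - vs n) (e/3)"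
      using small_pair[of "e/3"] by auto
    have n: "(1/2::real)^n < e/2" "bnd (v - vs n) (e/3)" using n0 e by auto
    have "bnd (- (T^Suc n)) ((1/2)^Suc n)" by (intro bnd_uminus Tpow_bnd)
    moreover have "(1/2::real)^Suc n \<le> e/2"
    proof -
      have "(1/2::real)^Suc n = (1/2)^n / 2" by simp
      also have "\<dots> \<le> (1/2)^n" by simp
      finally show ?thesis using n(1) by linarith
    qed
    ultimately have 1: "bnd (- (T^Suc n)) (e/2)" by (rule bnd_mono)
    have "bnd ((v - vs n) * (1 - T)) (e/3 * (3/2))" by (intro bnd_mult n(2) A_bnd) simp
    then have 2: "bnd ((v - vs n) * (1 - T)) (e/2)" by simp
    show "\<exists>n. bnd (- (T^Suc n)) (e/2) \<and> bnd ((v - vs n) * (1 - T)) (e/2)" using 1 2 by blast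
  qed
qed

lemma half_suc_le: "(1/2::real)^n < e/2 \<Longrightarrow> (1/2::real)^Suc n \<le> e/2"
proof -
  assume n: "(1/2::real)^n < e/2"
  have "(1/2::real)^Suc n = (1/2)^n / 2" by simp
  also have "\<dots> \<le> (1/2)^n" by simp
  finally show ?thesis using n by linarith
qed

lemma N_left: "(1 - T) * (1 + v) = 1"
proof -
  have "(1 - T) * (1 + v) - 1 = - (T^Suc n) + (1 - T) * (v - vs n)" for n
  proof -
    have "(1 - T) * (1 + v) = (1 - T) * (1 + vs n) + (1 - T) * (v - vs n)"
      by (simp add: algebra_simps)
    then show ?thesis by (simp add: vs_left)
  qed
  then show ?thesis
  proof (rule lim_identity[where X = "(1 - T) * (1 + v) - 1", simplified])
    fix e :: real assume e: "e > 0"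
    then obtain n where n0: "(1/2::real)^n < e/3" "bnd (v - vs n) (e/3)"
      using small_pair[of "e/3"] by auto
    have n: "(1/2::real)^n < e/2" "bnd (v - vs n) (e/3)" using n0 e by auto
    have "bnd (- (T^Suc n)) ((1/2)^Suc n)" by (intro bnd_uminus Tpow_bnd)
    then have 1: "bnd (- (T^Suc n)) (e/2)" using half_suc_le[OF n(1)] by (rule bnd_mono)
    have "bnd ((1 - T) * (v - vs n)) (3/2 * (e/3))" by (intro bnd_mult n(2) A_bnd) (use e in simp)
    then have 2: "bnd ((1 - T) * (v - vs n)) (e/2)" by simp
    show "\<exists>n. bnd (- (T^Suc n)) (e/2) \<and> bnd ((1 - T) * (v - vs n)) (e/2)" using 1 2 by blast
  qed
qed

lemma v_comm: "v * s = s * v"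
proof -
  have "v * s - s * v = (v - vs n) * s + - (s * (v - vs n))" for n
  proof -
    have "v * s - s * v = (v - vs n) * s - s * (v - vs n) + (vs n * s - s * vs n)"
      by (simp add: algebra_simps)
    then show ?thesis by (simp add: vs_comm)
  qed
  then have "v * s - s * v = 0"
  proof (rule lim_identity)
    fix e :: real assume e: "e > 0"
    then obtain N where N: "\<forall>n\<ge>N. bnd (v - vs n) e" using v_close by blast
    then have b: "bnd (v - vs N) e" by simp
    have "bnd ((v - vs N) * s) (e * (1/2))" by (intro bnd_mult b s_bnd) simp
    then have 1: "bnd ((v - vs N) * s) (e/2)" by simp
    have "bnd (s * (v - vs N)) (1/2 * e)" by (intro bnd_mult b s_bnd) (use e in simp)
    then have 2: "bnd (- (s * (v - vs N))) (e/2)" by (intro bnd_uminus) simp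
    show "\<exists>n. bnd ((v - vs n) * s) (e/2) \<and> bnd (- (s * (v - vs n))) (e/2)" using 1 2 by blast
  qed
  then show ?thesis by simp
qed

end

lemma sc_mult_mult: "(sc a * X) * (sc b * Y) = sc (a * b) * (X * (Y::'a::cstar_algebra mlt))"
proof -
  have "(sc a * X) * (sc b * Y) = sc a * ((X * sc b) * Y)" by (simp add: mult.assoc)
  also have "\<dots> = sc a * ((sc b * X) * Y)" by (simp add: sc_commute)
  also have "\<dots> = sc (a * b) * (X * Y)" by (simp add: sc_mult mult.assoc)
  finally show ?thesis .
qed

lemma sc_left: "X * (sc c * Y) = sc c * (X * (Y::'a::cstar_algebra mlt))"
  by (metis sc_commute mult.assoc)

lemma one_minus_comm: "Z1 * Z2 = Z2 * Z1 \<Longrightarrow> (1 - Z1) * (1 - Z2) = (1 - Z2) * (1 - (Z1::'a::cstar_algebra mlt))"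
  by (simp add: algebra_simps)

lemma sum_one_mlt: "(\<Sum>k<K. (1::'a::cstar_algebra mlt)) = sc (of_nat K)"
  by (induction K) (simp_all add: sc_add)

context core2
begin

definition A where "A = 1 - T"
definition Nn where "Nn = 1 + v"
definition U where "U = ustar A * Nn"

lemma ustar_T: "ustar T = sc (- \<i>) * s"
  unfolding T_def by (simp add: ustar_times ustar_sc s_star sc_commute)

lemma ustar_A: "ustar A = 1 - sc (- \<i>) * s"
  unfolding A_def by (simp add: ustar_minus ustar_T)

lemma AN: "A * Nn = 1" unfolding A_def Nn_def by (rule N_left)
lemma NA: "Nn * A = 1" unfolding A_def Nn_def by (rule N_right)

lemma Nn_s: "Nn * s = s * Nn" unfolding Nn_def by (simp add: algebra_simps v_comm)

lemma Nn_Astar: "Nn * ustar A = ustar A * Nn"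
proof -
  have "Nn * (sc (- \<i>) * s) = sc (- \<i>) * (Nn * s)" by (rule sc_left)
  also have "\<dots> = (sc (- \<i>) * s) * Nn" by (simp add: Nn_s mult.assoc)
  finally have eq: "Nn * (sc (- \<i>) * s) = (sc (- \<i>) * s) * Nn" .
  show ?thesis unfolding ustar_A by (simp add: right_diff_distrib left_diff_distrib eq)
qed

lemma A_eq: "A = 1 - sc \<i> * s" unfolding A_def T_def by simp

lemma A_Astar: "A * ustar A = ustar A * A"
proof -
  have "(sc \<i> * s) * (sc (- \<i>) * s) = (sc (- \<i>) * s) * (sc \<i> * s)"
    by (simp add: sc_mult_mult mult.commute)
  then have "(1 - sc \<i> * s) * (1 - sc (- \<i>) * s) = (1 - sc (- \<i>) * s) * (1 - sc \<i> * s)"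
    by (rule one_minus_comm)
  then show ?thesis by (simp only: ustar_A[symmetric] A_eq[symmetric])
qed

lemma U_unit: "U * ustar U = 1"
proof -
  have "U * ustar U = ustar A * Nn * (ustar Nn * A)"
    unfolding U_def by (simp add: ustar_times)
  also have "\<dots> = (Nn * ustar A) * ustar Nn * A" by (simp add: Nn_Astar mult.assoc)
  also have "\<dots> = Nn * ustar (Nn * A) * A" by (simp add: ustar_times mult.assoc)
  also have "\<dots> = 1" by (simp add: NA)
  finally show ?thesis .
qed

lemma Ustar_unit: "ustar U * ustar (ustar U) = 1"
proof -
  have "ustar U * ustar (ustar U) = ustar Nn * (A * ustar A) * Nn"
    unfolding U_def by (simp add: ustar_times mult.assoc)
  also have "\<dots> = ustar Nn * ustar A * (A * Nn)" by (simp add: A_Astar mult.assoc)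
  also have "\<dots> = 1" by (simp add: AN ustar_times[symmetric])
  finally show ?thesis .
qed

lemma one_minus_U: "1 - U = sc (- 2 * \<i>) * s * Nn"
proof -
  have "1 - U = A * Nn - ustar A * Nn" unfolding U_def by (simp add: AN)
  also have "\<dots> = (A - ustar A) * Nn" by (simp add: algebra_simps)
  also have "A - ustar A = sc (- \<i>) * s - sc \<i> * s" by (simp only: ustar_A) (simp add: A_eq)
  also have "\<dots> = (sc (- \<i>) - sc \<i>) * s" by (simp only: left_diff_distrib)
  also have "\<dots> = sc (- \<i> - \<i>) * s" by (simp only: sc_diff)
  also have "- \<i> - \<i> = - 2 * \<i>" by simp
  finally show ?thesis .
qed

definition G where "G K = (\<Sum>k<K. U^k)"

lemma G_s: "G K * s = sc (\<i> / 2) * ((1 - U^K) * A)"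
proof -
  have "G K * (1 - U) = 1 - U^K" unfolding G_def by (rule geom_tele)
  then have "G K * (sc (- 2 * \<i>) * s * Nn) * A = (1 - U^K) * A" by (simp add: one_minus_U)
  then have "G K * (sc (- 2 * \<i>) * s) = (1 - U^K) * A" by (simp add: mult.assoc NA)
  then have "sc (\<i> / 2) * (G K * (sc (- 2 * \<i>) * s)) = sc (\<i> / 2) * ((1 - U^K) * A)" by simp
  moreover have "sc (\<i> / 2) * (G K * (sc (- 2 * \<i>) * s)) = G K * s"
  proof -
    have "G K * (sc (- 2 * \<i>) * s) = sc (- 2 * \<i>) * (G K * s)"
      by (rule sc_left)
    then have "sc (\<i> / 2) * (G K * (sc (- 2 * \<i>) * s)) = sc (\<i> / 2 * (- 2 * \<i>)) * (G K * s)"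
      by (simp only: sc_mult mult.assoc)
    also have "\<i> / 2 * (- 2 * \<i>) = 1" by simp
    finally show ?thesis by simp
  qed
  ultimately show ?thesis by simp
qed

lemma G_s_bnd: "bnd (G K * s) (3/2)"
proof -
  have u: "bnd (U^K) 1" using unitary_bnd[OF unitary_power[OF U_unit]] .
  have b1: "bnd (1 - U^K) (1 + 1)" by (rule bnd_diff[OF bnd_one u])
  have b2: "bnd A (3/2)" unfolding A_def by (rule A_bnd)
  have "bnd ((1 - U^K) * A) ((1 + 1) * (3/2))" using bnd_mult[OF b1 b2] by simp
  then have "bnd ((1 - U^K) * A) (2 * (3/2))" by simp
  then have "bnd (sc (\<i> / 2) * ((1 - U^K) * A)) (cmod (\<i> / 2) * (2 * (3/2)))"
    by (rule bnd_mult[OF bnd_sc]) simp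
  then show ?thesis by (simp add: G_s norm_divide)
qed

end

context core2
begin

lemma U_minus_one: "U - 1 = v - sc (- \<i>) * s - (sc (- \<i>) * s) * v"
  unfolding U_def by (simp only: ustar_A Nn_def) (simp add: algebra_simps)

lemma u0_QP: "U - 1 \<in> QP"
  unfolding U_minus_one by (intro QP_diff QP_mult QP_sc s_QP v_QP)

lemma Upow_QP: "U^k - 1 \<in> QP"
proof (induction k)
  case 0 then show ?case by (simp add: QP_zero)
next
  case (Suc k)
  have eq: "U^Suc k - 1 = (U - 1) + (U^k - 1) + (U - 1) * (U^k - 1)"
    by (simp add: algebra_simps)
  show ?case by (simp only: eq) (intro QP_add QP_mult Suc.IH u0_QP)
qed

definition gs where "gs K = (\<Sum>k<K. U^k - 1)"

lemma gs_QP: "gs K \<in> QP" unfolding gs_def by (intro QP_sum Upow_QP)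

lemma G_eq: "G K = sc (of_nat K) + gs K"
proof -
  have "G K = (\<Sum>k<K. 1 + (U^k - 1))" unfolding G_def by simp
  also have "\<dots> = (\<Sum>k<K. 1) + gs K" unfolding gs_def by (rule sum.distrib)
  finally show ?thesis by (simp add: sum_one_mlt)
qed

definition ms where "ms K = sc (1 / of_nat K) * gs K"

lemma ms_QP: "ms K \<in> QP" unfolding ms_def by (intro QP_sc gs_QP)

lemma ms_eq: assumes "K > 0" shows "s + ms K * s = sc (1 / of_nat K) * (G K * s)"
proof -
  have "sc (1 / of_nat K) * (G K * s) = sc (1 / of_nat K) * (sc (of_nat K) * s) + ms K * s"
    unfolding G_eq ms_def by (simp add: distrib_right distrib_left mult.assoc)
  also have "sc (1 / of_nat K) * (sc (of_nat K) * s) = sc (1 / of_nat K * of_nat K) * s"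
    by (simp only: sc_mult mult.assoc)
  also have "(1 / of_nat K * of_nat K :: complex) = 1" using assms by simp
  finally show ?thesis by simp
qed

lemma ms_bnd: assumes "K > 0" shows "bnd (s + ms K * s) (3 / (2 * real K))"
proof -
  have "bnd (sc (1 / of_nat K) * (G K * s)) (cmod (1 / of_nat K) * (3/2))"
    by (rule bnd_mult[OF bnd_sc G_s_bnd]) simp
  moreover have "cmod (1 / of_nat K :: complex) * (3/2) = 3 / (2 * real K)"
    using assms by (simp add: norm_divide)
  ultimately have "bnd (sc (1 / of_nat K) * (G K * s)) (3 / (2 * real K))" by (metis (no_types))
  then show ?thesis by (simp only: ms_eq[OF assms])
qed

lemma ms_diff_bnd: assumes "K \<ge> N" "L \<ge> N" "N > 0"
  shows "bnd (ms K - ms L) (\<kappa> * (3 / real N))"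
  unfolding bnd_def
proof
  fix b
  have K: "K > 0" and L: "L > 0" using assms by auto
  have "bnd ((s + ms K * s) - (s + ms L * s)) (3 / (2 * real K) + 3 / (2 * real L))"
    by (rule bnd_diff[OF ms_bnd[OF K] ms_bnd[OF L]])
  moreover have "3 / (2 * real K) + 3 / (2 * real L) \<le> 3 / real N"
  proof -
    have "3 / (2 * real K) \<le> 3 / (2 * real N)" using assms by (simp add: frac_le)
    moreover have "3 / (2 * real L) \<le> 3 / (2 * real N)" using assms by (simp add: frac_le)
    ultimately show ?thesis by simp
  qed
  ultimately have bb: "bnd ((ms K - ms L) * s) (3 / real N)"
    by (simp add: algebra_simps bnd_mono)
  let ?y = "act b (ms K - ms L)"
  have "ms K - ms L \<in> QP" by (intro QP_diff ms_QP)
  then have "?y \<in> J" unfolding QP_def by blast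
  then have "norm ?y \<le> \<kappa> * norm (act ?y s)" by (rule s_below)
  also have "act ?y s = act b ((ms K - ms L) * s)" by simp
  also have "\<kappa> * norm (act b ((ms K - ms L) * s)) \<le> \<kappa> * (3 / real N * norm b)"
    by (rule mult_left_mono[OF bndD[OF bb] kappa])
  finally show "norm ?y \<le> \<kappa> * (3 / real N) * norm b" by (simp add: ac_simps)
qed

definition mseq where "mseq n = ms (Suc n)"

lemma mseq_cauchy: assumes e: "e > 0" shows "\<exists>N. \<forall>n\<ge>N. \<forall>k\<ge>N. bnd (mseq n - mseq k) e"
proof -
  obtain N0 where N0: "3 * \<kappa> / e < real N0" using reals_Archimedean2 by blast
  define N1 where "N1 = max N0 1"
  have N1: "N1 > 0" "real N0 \<le> real N1" unfolding N1_def by auto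
  have le: "\<kappa> * (3 / real N1) \<le> e"
  proof -
    have a: "3 * \<kappa> < e * real N0" using N0 e by (simp add: field_simps)
    have "e * real N0 \<le> e * real N1" using N1(2) e by (intro mult_left_mono) simp_all
    then have "3 * \<kappa> < e * real N1" using a by linarith
    then show ?thesis using N1 by (simp add: field_simps)
  qed
  show ?thesis
  proof (intro exI[of _ N1] allI impI)
    fix n k assume "n \<ge> N1" "k \<ge> N1"
    then have "bnd (ms (Suc n) - ms (Suc k)) (\<kappa> * (3 / real N1))"
      using N1 by (intro ms_diff_bnd) auto
    then show "bnd (mseq n - mseq k) e" unfolding mseq_def using le by (rule bnd_mono)
  qed
qed

definition w0 where "w0 = (SOME w. \<forall>e>0. \<exists>N. \<forall>n\<ge>N. bnd (mseq n - w) e)"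

lemma w0_conv: "\<forall>e>0. \<exists>N. \<forall>n\<ge>N. bnd (mseq n - w0) e"
  unfolding w0_def by (rule someI_ex[OF mlt_complete]) (rule mseq_cauchy)

lemma w0_QP: "w0 \<in> QP"
  by (rule QP_lim[OF _ w0_conv]) (simp add: mseq_def ms_QP)

lemma w0_eq: "s + w0 * s = 0"
proof (rule lim_identity)
  fix n
  show "s + w0 * s = (s + mseq n * s) + (w0 - mseq n) * s" by (simp add: algebra_simps)
next
  fix e :: real assume e: "e > 0"
  obtain N where N: "\<forall>n\<ge>N. bnd (mseq n - w0) e" using w0_conv e by blast
  obtain N0 where N0: "3 / e < real N0" using reals_Archimedean2 by blast
  define n where "n = max N N0"
  have b1: "bnd (- (mseq n - w0)) e" using N by (intro bnd_uminus) (simp add: n_def)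
  have "bnd ((w0 - mseq n) * s) (e * (1/2))"
    using bnd_mult[OF b1 s_bnd] by simp
  then have 2: "bnd ((w0 - mseq n) * s) (e/2)" by simp
  have "bnd (s + ms (Suc n) * s) (3 / (2 * real (Suc n)))" by (rule ms_bnd) simp
  moreover have "3 / (2 * real (Suc n)) \<le> e / 2"
  proof -
    have "3 / e < real (Suc n)" using N0 by (simp add: n_def)
    then have "3 < e * real (Suc n)" using e by (simp add: field_simps)
    then show ?thesis using e by (simp add: field_simps)
  qed
  ultimately have 1: "bnd (s + mseq n * s) (e/2)" unfolding mseq_def by (rule bnd_mono)
  show "\<exists>n. bnd (s + mseq n * s) (e / 2) \<and> bnd ((w0 - mseq n) * s) (e / 2)" using 1 2 by blast
qed

definition w where "w = - w0"

lemma w_QP: "w \<in> QP" unfolding w_def by (intro QP_uminus w0_QP)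

lemma w_s: "w * s = s"
proof -
  have "w0 * s = - s" using w0_eq by (simp add: eq_neg_iff_add_eq_0 add.commute)
  then show ?thesis unfolding w_def by simp
qed

lemma result: "\<exists>e\<in>QP. ustar e = e \<and> e * e = e \<and> range (\<lambda>a. act a m) = range (\<lambda>a. act a e)"
proof -
  define h where "h = ustar m * m"
  have h_s: "h = sc (complex_of_real (1 / t)) * s"
  proof -
    have "sc (complex_of_real (1 / t)) * s = sc (complex_of_real (1 / t) * complex_of_real t) * h"
      unfolding s_def h_def by (simp only: sc_mult mult.assoc)
    also have "complex_of_real (1 / t) * complex_of_real t = 1" using t_pos by (simp flip: of_real_mult)
    finally show ?thesis by simp
  qed
  have wh: "w * h = h" unfolding h_s by (simp add: sc_left w_s)
  have hstar: "ustar h = h" unfolding h_def by (simp add: ustar_times)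
  define e where "e = ustar w"
  have he: "h * e = h" using wh unfolding e_def by (metis hstar ustar_times)
  define D where "D = m - m * e"
  have "ustar D * D = h - h * e - w * h + w * h * e"
    unfolding D_def h_def e_def by (simp add: ustar_minus ustar_times algebra_simps)
  also have "\<dots> = 0" by (simp add: he wh mult.assoc[symmetric])
  finally have "D = 0" by (rule cstar_mlt)
  then have me: "m * e = m" unfolding D_def by simp
  have eQP: "e \<in> QP" unfolding e_def by (intro QP_star w_QP)
  have fix_e: "act y e = y" if yJ: "y \<in> J" for y
  proof -
    obtain a where "y = act a m" using yJ unfolding J_def by blast
    then show ?thesis by (metis act_times_mlt me)
  qed
  have eJ: "act c e \<in> J" for c using eQP unfolding QP_def by blast
  have ee: "e * e = e" by (rule mlt_eqI) (simp add: fix_e eJ)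
  have we: "w * e = w"
  proof (rule mlt_eqI)
    fix b
    have "act b w \<in> J" using w_QP unfolding QP_def by blast
    then show "act b (w * e) = act b w" by (simp add: fix_e)
  qed
  have "ustar w = w"
  proof -
    have "ustar w = ustar (w * ustar w)" using we unfolding e_def by simp
    also have "\<dots> = w * ustar w" by (simp add: ustar_times)
    also have "\<dots> = w" using we unfolding e_def by simp
    finally show ?thesis .
  qed
  then have se: "ustar e = e" unfolding e_def by simp
  have "range (\<lambda>a. act a m) = range (\<lambda>a. act a e)"
  proof
    show "range (\<lambda>a. act a m) \<subseteq> range (\<lambda>a. act a e)"
    proof
      fix y assume "y \<in> range (\<lambda>a. act a m)"
      then have "y \<in> J" unfolding J_def .
      then have "y = act y e" by (simp add: fix_e)
      then show "y \<in> range (\<lambda>a. act a e)" by (rule range_eqI)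
    qed
    show "range (\<lambda>a. act a e) \<subseteq> range (\<lambda>a. act a m)"
      using eJ unfolding J_def by blast
  qed
  then show ?thesis using eQP se ee by blast
qed

end

context core
begin

lemma core_result: "\<exists>e\<in>QP. ustar e = e \<and> e * e = e \<and> range (\<lambda>a. act a m) = range (\<lambda>a. act a e)"
proof -
  define h where "h = ustar m * m"
  obtain K where K: "K \<ge> 0" "bnd h K" using mlt_bounded by blast
  define K' where "K' = K + 1"
  have K'pos: "K' > 0" unfolding K'_def using K by simp
  have hK': "bnd h K'" using K unfolding K'_def by (auto intro: bnd_mono)
  obtain M where M: "M \<ge> 0" "\<forall>y\<in>range (\<lambda>a. act a m). norm y \<le> M * norm (act y (ustar m * m))"
    using bdd_below[OF clJ] by blast
  define t where "t = 1 / (2 * K')"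
  have tpos: "t > 0" unfolding t_def using K'pos by simp
  define s where "s = sc (complex_of_real t) * h"
  define \<kappa> where "\<kappa> = 2 * K' * M"
  have sb: "bnd s (1/2)"
  proof -
    have "bnd s (cmod (complex_of_real t) * K')"
      unfolding s_def by (rule bnd_mult[OF bnd_sc hK']) (use K'pos in simp)
    moreover have "cmod (complex_of_real t) * K' = 1/2"
    proof -
      have "cmod (complex_of_real t) = t" using tpos by simp
      moreover have "t * K' = 1/2" using K'pos by (simp add: t_def)
      ultimately show ?thesis by simp
    qed
    ultimately show ?thesis by (metis (no_types))
  qed
  have act_s: "act y s = scaleR t (act y h)" for y
    unfolding s_def by (simp add: cscale_of_real)
  have below: "norm y \<le> \<kappa> * norm (act y s)" if yJ: "y \<in> J" for y
  proof -
    have "norm y \<le> M * norm (act y h)" using M yJ unfolding J_def h_def by blast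
    also have "norm (act y h) = 2 * K' * norm (act y s)"
      using tpos K'pos by (simp add: act_s t_def)
    finally show ?thesis by (simp add: \<kappa>_def ac_simps)
  qed
  interpret c2: core2 m Q s t \<kappa>
  proof unfold_locales
    show "s = sc (complex_of_real t) * (ustar m * m)" unfolding s_def h_def ..
    show "t > 0" by (rule tpos)
    show "bnd s (1/2)" by (rule sb)
    show "\<kappa> \<ge> 0" unfolding \<kappa>_def using K'pos M by simp
    show "norm y \<le> \<kappa> * norm (act y s)" if "y \<in> J" for y using below that .
  qed
  show ?thesis by (rule c2.result)
qed

end

lemma emb_lim:
  fixes Z :: "nat \<Rightarrow> 'a::cstar_algebra mlt"
  assumes Z: "\<And>n. Z n \<in> range emb" and conv: "\<forall>e>0. \<exists>N. \<forall>n\<ge>N. bnd (Z n - Zl) e"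
  shows "Zl \<in> range emb"
proof -
  define z where "z n = (SOME y. Z n = emb y)" for n
  have Zz: "Z n = emb (z n)" for n unfolding z_def using Z[of n] by (metis (mono_tags, lifting) rangeE someI_ex)
  have cz: "Cauchy z"
  proof (rule cauchy_from_bnd[where c = 1])
    fix e :: real assume e: "e > 0"
    then obtain N where N: "\<forall>n\<ge>N. bnd (Z n - Zl) (e/2)" using conv by (meson half_gt_zero)
    show "\<exists>N. \<forall>n\<ge>N. \<forall>k\<ge>N. norm (z n - z k) \<le> e * 1"
    proof (intro exI[of _ N] allI impI)
      fix n k assume "n \<ge> N" "k \<ge> N"
      then have "bnd (Z n - Zl) (e/2)" "bnd (Z k - Zl) (e/2)" using N by auto
      then have "bnd ((Z n - Zl) - (Z k - Zl)) (e/2 + e/2)" by (rule bnd_diff)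
      then have "bnd (emb (z n - z k)) e" by (simp add: Zz emb_minus)
      then show "norm (z n - z k) \<le> e * 1" using emb_bnd_norm[of "z n - z k" e] e by simp
    qed
  qed simp
  then obtain z0 where z0: "z \<longlonglongrightarrow> z0" by (auto simp: Cauchy_convergent_iff convergent_def)
  have "Zl = emb z0"
  proof (rule mlt_eqI)
    fix b
    have 1: "(\<lambda>n. act b (Z n)) \<longlonglongrightarrow> b * z0" unfolding Zz act_emb by (intro tendsto_intros z0)
    have 2: "(\<lambda>n. act b (Z n)) \<longlonglongrightarrow> act b Zl"
    proof (rule LIMSEQ_I)
      fix r :: real assume r: "r > 0"
      have "r / (norm b + 1) > 0" using r by (simp add: add_nonneg_pos)
      then obtain N where N: "\<forall>n\<ge>N. bnd (Z n - Zl) (r / (norm b + 1))" using conv by blast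
      show "\<exists>no. \<forall>n\<ge>no. norm (act b (Z n) - act b Zl) < r"
      proof (intro exI[of _ N] allI impI)
        fix n assume "n \<ge> N"
        then have "norm (act b (Z n - Zl)) \<le> r / (norm b + 1) * norm b" using N bndD by blast
        also have "\<dots> < r"
        proof -
          have p: "r / (norm b + 1) > 0" using r by (simp add: add_nonneg_pos)
          have "r / (norm b + 1) * norm b < r / (norm b + 1) * (norm b + 1)"
            using p by (intro mult_strict_left_mono) simp_all
          also have "\<dots> = r"
          proof -
            have "norm b + 1 \<noteq> 0" by (metis add_nonneg_pos norm_ge_zero zero_less_one less_irrefl)
            then show ?thesis by simp
          qed
          finally show ?thesis .
        qed
        finally show "norm (act b (Z n) - act b Zl) < r" by simp
      qed
    qed
    show "act b Zl = act b (emb z0)" using LIMSEQ_unique[OF 2 1] by simp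
  qed
  then show ?thesis by simp
qed

lemma part1:
  fixes x :: "'a::cstar_algebra"
  assumes cl: "closed (left_mult_set x)"
  shows "\<exists>e\<in>left_mult_set x. invol e = e \<and> e * e = e \<and> left_mult_set x = left_mult_set e"
proof -
  have lms: "left_mult_set z = range (\<lambda>a. act a (emb z))" for z :: 'a
    unfolding left_mult_set_def by auto
  interpret c: core "emb x" "range emb"
  proof unfold_locales
    show "closed (range (\<lambda>a. act a (emb x)))" using cl lms by simp
    show "emb x \<in> range emb" by simp
    show "X + Y \<in> range emb" if "X \<in> range emb" "Y \<in> range emb" for X Y :: "'a mlt"
      using that by (auto simp: emb_plus[symmetric])
    show "X * Y \<in> range emb" if "X \<in> range emb" "Y \<in> range emb" for X Y :: "'a mlt"
      using that by (auto simp: emb_times[symmetric])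
    show "sc c * X \<in> range emb" if "X \<in> range emb" for X :: "'a mlt" and c
      using that by (auto simp: emb_sc)
    show "ustar X \<in> range emb" if "X \<in> range emb" for X :: "'a mlt"
      using that by (auto simp: ustar_emb)
    show "Zl \<in> range emb" if "\<And>n. Z n \<in> range emb" "\<forall>e>0. \<exists>N. \<forall>n\<ge>N. bnd (Z n - Zl) e"
      for Z :: "nat \<Rightarrow> 'a mlt" and Zl
      using emb_lim that by blast
  qed
  obtain E where E: "E \<in> c.QP" "ustar E = E" "E * E = E" "range (\<lambda>a. act a (emb x)) = range (\<lambda>a. act a E)"
    using c.core_result by blast
  have "E \<in> range emb" using E(1) unfolding c.QP_def by blast
  then obtain e where e: "E = emb e" by blast
  have inv: "invol e = e" using E(2) e by (simp add: ustar_emb emb_inj)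
  have idem: "e * e = e" using E(3) e by (simp add: emb_times[symmetric] emb_inj)
  have "act e E \<in> c.J" using E(1) unfolding c.QP_def by blast
  then have "e \<in> left_mult_set x" using idem e unfolding c.J_def lms by simp
  moreover have "left_mult_set x = left_mult_set e" using E(4) e lms by simp
  ultimately show ?thesis using inv idem by blast
qed

lemma part2:
  fixes m :: "'a::cstar_algebra multiplier"
  assumes mm: "is_multiplier m" and cl: "closed (mult_left_mult_set m)"
  shows "\<exists>e. is_multiplier e \<and> mult_star e = e \<and> mult_times e e = e \<and>
                mult_left_mult_set m = mult_left_mult_set e"
proof -
  have lms: "mult_left_mult_set (Rep_mlt X) = range (\<lambda>a. act a X)" for X :: "'a mlt"
    unfolding mult_left_mult_set_def act_def by auto
  have mA: "Rep_mlt (Abs_mlt m) = m" using mm by (simp add: Abs_mlt_inverse)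
  interpret c: core "Abs_mlt m" UNIV
  proof unfold_locales
    show "closed (range (\<lambda>a. act a (Abs_mlt m)))" using cl lms[of "Abs_mlt m"] mA by simp
  qed simp_all
  obtain E where E: "ustar E = E" "E * E = E" "range (\<lambda>a. act a (Abs_mlt m)) = range (\<lambda>a. act a E)"
    using c.core_result by blast
  have "is_multiplier (Rep_mlt E)" by (rule Rep_mlt_mult)
  moreover have "mult_star (Rep_mlt E) = Rep_mlt E"
  proof -
    have "Rep_mlt (ustar E) = mult_star (Rep_mlt E)"
      unfolding ustar_def by (simp add: Abs_mlt_inverse is_mult_star)
    then show ?thesis using E(1) by simp
  qed
  moreover have "mult_times (Rep_mlt E) (Rep_mlt E) = Rep_mlt E"
  proof -
    have "Rep_mlt (E * E) = mult_times (Rep_mlt E) (Rep_mlt E)"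
      unfolding times_mlt_def by (simp add: Abs_mlt_inverse is_mult_times)
    then show ?thesis using E(2) by simp
  qed
  moreover have "mult_left_mult_set m = mult_left_mult_set (Rep_mlt E)"
    using lms[of "Abs_mlt m"] lms[of E] mA E(3) by simp
  ultimately show ?thesis by blast
qed

theorem proposition2p5:
  fixes x :: "'a::cstar_algebra" and m :: "'a multiplier"
  shows "(closed (left_mult_set x) \<longrightarrow>
            (\<exists>e\<in>left_mult_set x. invol e = e \<and> e * e = e \<and>
                left_mult_set x = left_mult_set e))
       \<and> (is_multiplier m \<and> closed (mult_left_mult_set m) \<longrightarrow>
            (\<exists>e. is_multiplier e \<and> mult_star e = e \<and> mult_times e e = e \<and>
                mult_left_mult_set m = mult_left_mult_set e))"
  using part1[of x] part2[of m] by blast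

end
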